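(* For every $n\ge 1$, $$R_n(x,y,z,t) = \sum_{T \in \mathcal{C}_{n+1}} (y+1)^{\mathrm{impe}(T)-\mathrm{impp}(T)}\,(y+t)^{\mathrm{impp}(T)}\, x^{\deg_T(1)-1}\, z^{\mathrm{lead}(T)-\deg_T(1)-1}.$$
   Context: Polynomials $Q_n(x,y,z,t)$ are defined by $Q_1=1$ and $Q_{n+1} = \left[x+nz+(y+t)\left(n+y\,\partial_y\right)\right]Q_n$, and $R_n(x,y,z,t) := Q_n(x,y+1,z,t-1)$. $\mathcal{C}_m$ is the set of Cayley trees on $[m]$ (trees with vertex set labelled bijectively by $[m]$) rooted at $1$; edges $(i,j)$ are oriented from parent $i$ to child $j$, and $\lambda_T$ denotes the label. For a vertex $v$, $\beta_T(v)$ is the smallest label among the descendants of $v$ ($v$ included). An edge $(i,j)$ is improper if $\lambda_T(i)>\beta_T(j)$, proper otherwise; $\mathrm{impe}(T)$ is the number of improper edges. A vertex is an improper parent if it has at least one improper child; $\mathrm{impp}(T)$ is the number of improper parents. $\deg_T(1)$ is the degree of the root. For a vertex $i$ with root-to-$i$ path $L(i)=(1=a_0,\dots,a_k=i)$, its greater ancestors path is the longest suffix $(a_p,\dots,a_k)$ of $L(i)$ whose vertices $j$ all satisfy $\lambda_T(j)\ge\lambda_T(i)$; $i$ is leading if $\beta_T(a_p)=\lambda_T(i)$; $\mathrm{lead}(T)$ is the number of leading vertices. *)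

theory Defs
  imports "HOL-Computational_Algebra.Polynomial"
begin

(* The operator y*\<partial>_y is rendered with the formal
   derivative pderiv.  Index 0 is unused (Q_0 := 0). *)
fun Qpoly :: "nat \<Rightarrow> real \<Rightarrow> real \<Rightarrow> real \<Rightarrow> real poly" where
  "Qpoly 0 x z t = 0"
| "Qpoly (Suc 0) x z t = 1"
| "Qpoly (Suc (Suc n)) x z t =
     (let q = Qpoly (Suc n) x z t; m = real (Suc n) in
       [: x + m * z + t * m, m :] * q + [: t, 1 :] * [: 0, 1 :] * pderiv q)"

definition Q :: "nat \<Rightarrow> real \<Rightarrow> real \<Rightarrow> real \<Rightarrow> real \<Rightarrow> real" where
  "Q n x y z t = poly (Qpoly n x z t) y"

definition R :: "nat \<Rightarrow> real \<Rightarrow> real \<Rightarrow> real \<Rightarrow> real \<Rightarrow> real" where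
  "R n x y z t = Q n x (y + 1) z (t - 1)"

(* Cayley trees on [m] rooted at 1, encoded by their parent function p:
   vertices 2..m have parent p v in 1..m, p is 0 outside 2..m, and every
   vertex reaches the root 1 by iterating p.  Labels are the vertices. *)
definition cayley_trees :: "nat \<Rightarrow> (nat \<Rightarrow> nat) set" where
  "cayley_trees m = {p. (\<forall>v. v \<notin> {2..m} \<longrightarrow> p v = 0)
      \<and> (\<forall>v\<in>{2..m}. p v \<in> {1..m})
      \<and> (\<forall>v\<in>{1..m}. \<exists>k. (p ^^ k) v = 1)}"

definition desc :: "nat \<Rightarrow> (nat \<Rightarrow> nat) \<Rightarrow> nat \<Rightarrow> nat set" where
  "desc m p v = {w \<in> {1..m}. \<exists>k. (p ^^ k) w = v}"

definition beta :: "nat \<Rightarrow> (nat \<Rightarrow> nat) \<Rightarrow> nat \<Rightarrow> nat" where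
  "beta m p v = Min (desc m p v)"

definition impe :: "nat \<Rightarrow> (nat \<Rightarrow> nat) \<Rightarrow> nat" where
  "impe m p = card {j \<in> {2..m}. p j > beta m p j}"

definition impp :: "nat \<Rightarrow> (nat \<Rightarrow> nat) \<Rightarrow> nat" where
  "impp m p = card {i \<in> {1..m}. \<exists>j\<in>{2..m}. p j = i \<and> i > beta m p j}"

definition root_deg :: "nat \<Rightarrow> (nat \<Rightarrow> nat) \<Rightarrow> nat" where
  "root_deg m p = card {j \<in> {2..m}. p j = 1}"

(* depth of i: the root-to-i path is ((p^^d) i, ..., (p^^0) i) *)
definition depth :: "(nat \<Rightarrow> nat) \<Rightarrow> nat \<Rightarrow> nat" where
  "depth p i = (LEAST k. (p ^^ k) i = 1)"

(* top vertex a_p of the greater ancestors path of i *)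
definition gap_top :: "(nat \<Rightarrow> nat) \<Rightarrow> nat \<Rightarrow> nat" where
  "gap_top p i = (p ^^ (GREATEST q. q \<le> depth p i \<and> (\<forall>k\<le>q. i \<le> (p ^^ k) i))) i"

definition leading :: "nat \<Rightarrow> (nat \<Rightarrow> nat) \<Rightarrow> nat \<Rightarrow> bool" where
  "leading m p i \<longleftrightarrow> beta m p (gap_top p i) = i"

definition lead :: "nat \<Rightarrow> (nat \<Rightarrow> nat) \<Rightarrow> nat" where
  "lead m p = card {i \<in> {1..m}. leading m p i}"

end

theory Submission
  imports Defs
begin


definition anc :: "(nat \<Rightarrow> nat) \<Rightarrow> nat \<Rightarrow> nat set" where
  "anc p u = range (\<lambda>k. (p ^^ k) u)"

lemma anc_step: "anc p u = insert u (anc p (p u))"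
  unfolding anc_def
proof (intro equalityI subsetI)
  fix w assume "w \<in> range (\<lambda>k. (p ^^ k) u)"
  then obtain k where w: "w = (p ^^ k) u" by auto
  show "w \<in> insert u (range (\<lambda>k. (p ^^ k) (p u)))"
  proof (cases k)
    case 0 then show ?thesis using w by simp
  next
    case (Suc k') then show ?thesis using w by (simp add: funpow_Suc_right del: funpow.simps)
  qed
next
  fix w assume "w \<in> insert u (range (\<lambda>k. (p ^^ k) (p u)))"
  then show "w \<in> range (\<lambda>k. (p ^^ k) u)"
  proof
    assume "w = u" then show ?thesis by (metis funpow_0 rangeI)
  next
    assume "w \<in> range (\<lambda>k. (p ^^ k) (p u))"
    then obtain k where "w = (p ^^ k) (p u)" by auto
    then have "w = (p ^^ Suc k) u" by (simp add: funpow_Suc_right del: funpow.simps)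
    then show ?thesis by blast
  qed
qed

lemma anc_self: "u \<in> anc p u"
  by (subst anc_step) simp

lemma anc_trans: "w \<in> anc p u \<Longrightarrow> anc p w \<subseteq> anc p u"
proof
  fix v assume "w \<in> anc p u" "v \<in> anc p w"
  then obtain a b where "w = (p ^^ a) u" "v = (p ^^ b) w" by (auto simp: anc_def)
  then have "v = (p ^^ (b + a)) u" by (simp add: funpow_add)
  then show "v \<in> anc p u" by (auto simp: anc_def)
qed

lemma anc_closed: "w \<in> anc p u \<Longrightarrow> p w \<in> anc p u"
  using anc_trans[of w p u] anc_step[of p w] anc_self[of "p w" p] by auto

lemma funpow_split: "d \<le> k \<Longrightarrow> (f ^^ k) x = (f ^^ (k - d)) ((f ^^ d) x)"
  by (metis funpow_add le_add_diff_inverse2 comp_apply)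

lemma anc_fix: "p u = u \<Longrightarrow> anc p u = {u}"
proof -
  assume h: "p u = u"
  have "(p ^^ k) u = u" for k by (induction k) (auto simp: h)
  then show ?thesis by (auto simp: anc_def)
qed

lemma desc_anc: "desc m p v = {w \<in> {1..m}. v \<in> anc p w}"
  by (auto simp: desc_def anc_def)

lemma anc_ex: "(\<exists>k. (p ^^ k) v = w) \<longleftrightarrow> w \<in> anc p v"
  by (auto simp: anc_def)

locale ctree =
  fixes m :: nat and p :: "nat \<Rightarrow> nat"
  assumes ct: "p \<in> cayley_trees m"
begin

lemma p_out: "v \<notin> {2..m} \<Longrightarrow> p v = 0"
  using ct by (auto simp: cayley_trees_def)

lemma p_in: "v \<in> {2..m} \<Longrightarrow> p v \<in> {1..m}"
  using ct by (auto simp: cayley_trees_def)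

lemma reach: "v \<in> {1..m} \<Longrightarrow> 1 \<in> anc p v"
proof -
  assume "v \<in> {1..m}"
  then obtain k where "(p ^^ k) v = 1" using ct unfolding cayley_trees_def by blast
  then show ?thesis unfolding anc_def by (metis rangeI)
qed

lemma p0[simp]: "p 0 = 0" by (rule p_out) auto
lemma p1[simp]: "p 1 = 0" by (rule p_out) auto
lemma p1'[simp]: "p (Suc 0) = 0" by (rule p_out) auto

lemma anc0[simp]: "anc p 0 = {0}" by (rule anc_fix) simp
lemma anc1[simp]: "anc p 1 = {1, 0}" by (subst anc_step) simp
lemma anc1'[simp]: "anc p (Suc 0) = {Suc 0, 0}" by (subst anc_step) simp

lemma p_le: "v \<le> m \<Longrightarrow> p v \<le> m"
  using p_in[of v] p_out[of v] by (cases "v \<in> {2..m}") auto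

lemma pow_le: "u \<le> m \<Longrightarrow> (p ^^ k) u \<le> m"
  by (induction k) (auto simp: p_le)

lemma anc_le: "u \<le> m \<Longrightarrow> anc p u \<subseteq> {..m}"
  using pow_le by (auto simp: anc_def)

lemma pow0: "(p ^^ k) 0 = 0"
  by (induction k) auto

lemma pow1: "(p ^^ Suc k) 1 = 0"
  using pow0[of k] by (simp add: funpow_Suc_right del: funpow.simps)

lemma depth_ex: "v \<in> {1..m} \<Longrightarrow> (p ^^ depth p v) v = 1"
  unfolding depth_def using reach[of v] by (auto simp: anc_def intro: LeastI)

lemma depth_eq: assumes "u \<in> {1..m}" shows "(p ^^ k) u = 1 \<longleftrightarrow> k = depth p u"
proof
  assume k: "(p ^^ k) u = 1"
  have "depth p u \<le> k" unfolding depth_def using k by (rule Least_le)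
  moreover have "\<not> depth p u < k"
  proof
    assume l: "depth p u < k"
    have "(p ^^ k) u = (p ^^ (k - depth p u)) ((p ^^ depth p u) u)"
      using l by (simp add: funpow_split)
    also have "\<dots> = (p ^^ (k - depth p u)) 1" using depth_ex[OF assms] by simp
    also have "\<dots> = 0" using l pow1 by (metis Suc_diff_Suc)
    finally show False using k by simp
  qed
  ultimately show "k = depth p u" by simp
next
  assume "k = depth p u" then show "(p ^^ k) u = 1" using depth_ex[OF assms] by simp
qed

lemma anc_depth:
  assumes u: "u \<in> {1..m}" and w: "w = (p ^^ l) u" "w \<in> {1..m}"
  shows "l \<le> depth p u \<and> depth p w = depth p u - l"
proof -
  let ?d = "depth p u"
  have l: "l \<le> ?d"
  proof (rule ccontr)
    assume "\<not> l \<le> ?d"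
    then have "w = (p ^^ (l - ?d)) ((p ^^ ?d) u)" using w by (simp add: funpow_split)
    also have "\<dots> = (p ^^ (l - ?d)) 1" using depth_ex[OF u] by simp
    also have "\<dots> = 0" using \<open>\<not> l \<le> ?d\<close> pow1 by (metis Suc_diff_Suc not_le)
    finally show False using w by simp
  qed
  have "(p ^^ (?d - l)) w = (p ^^ ?d) u" using w l funpow_split[of l ?d p u] by simp
  then have "(p ^^ (?d - l)) w = 1" using depth_ex[OF u] by simp
  then have "depth p w = ?d - l" using depth_eq[OF w(2)] by simp
  with l show ?thesis by simp
qed

lemma depth_anc_lt:
  assumes u: "u \<in> {1..m}" and w: "w \<in> anc p (p u)" "w \<in> {1..m}"
  shows "depth p w < depth p u"
proof -
  obtain k where "w = (p ^^ k) (p u)" using w by (auto simp: anc_def)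
  then have "w = (p ^^ Suc k) u" by (simp add: funpow_Suc_right del: funpow.simps)
  from anc_depth[OF u this w(2)] show ?thesis by simp
qed

lemma anc_induct[consumes 1, case_names step]:
  assumes "u \<in> {1..m}"
    and step: "\<And>u. u \<in> {1..m} \<Longrightarrow> (\<And>w. w \<in> anc p (p u) \<Longrightarrow> w \<in> {1..m} \<Longrightarrow> P w) \<Longrightarrow> P u"
  shows "P u"
  using assms(1)
proof (induction "depth p u" arbitrary: u rule: less_induct)
  case less
  show ?case
    by (rule step[OF less.prems]) (rule less.hyps, rule depth_anc_lt[OF less.prems], auto)
qed

lemma acyclic: "u \<in> {1..m} \<Longrightarrow> u \<notin> anc p (p u)"
  using depth_anc_lt by blast

lemma p_neq: "u \<in> {1..m} \<Longrightarrow> p u \<noteq> u"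
  using acyclic anc_self by metis

lemma desc_sub: "desc m p v \<subseteq> {1..m}"
  by (auto simp: desc_def)

lemma desc_fin: "finite (desc m p v)"
  using desc_sub finite_subset by blast

lemma desc_self: "v \<in> {1..m} \<Longrightarrow> v \<in> desc m p v"
  by (auto simp: desc_anc anc_self)

lemma beta_in: "v \<in> {1..m} \<Longrightarrow> beta m p v \<in> desc m p v"
  unfolding beta_def using desc_self desc_fin by (metis Min_in empty_iff)

lemma beta_le: "w \<in> desc m p v \<Longrightarrow> beta m p v \<le> w"
  unfolding beta_def using desc_fin by (rule Min_le)

lemma beta_le_self: "v \<in> {1..m} \<Longrightarrow> beta m p v \<le> v"
  using beta_le desc_self by blast

lemma beta_range: "v \<in> {1..m} \<Longrightarrow> beta m p v \<in> {1..m}"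
  using beta_in desc_sub by blast

lemma child_desc: "c \<in> {2..m} \<Longrightarrow> desc m p c \<subseteq> desc m p (p c)"
  unfolding desc_anc using anc_closed by blast

lemma beta_child: "c \<in> {2..m} \<Longrightarrow> beta m p (p c) \<le> beta m p c"
  using child_desc beta_in[of c] beta_le by (metis atLeastAtMost_iff le_trans one_le_numeral subsetD)

lemma par_not_desc: "c \<in> {2..m} \<Longrightarrow> p c \<notin> desc m p c"
  using acyclic[of c] by (auto simp: desc_anc anc_trans)

lemma beta_ne_par: "c \<in> {2..m} \<Longrightarrow> beta m p c \<noteq> p c"
  using par_not_desc beta_in[of c] by force

lemma sib_disj:
  assumes c: "c \<in> {2..m}" "c' \<in> {2..m}" "p c = p c'" "c \<noteq> c'"
  shows "desc m p c \<inter> desc m p c' = {}"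
proof (rule ccontr)
  assume "desc m p c \<inter> desc m p c' \<noteq> {}"
  then obtain u a b where u: "u \<in> {1..m}" "c = (p ^^ a) u" "c' = (p ^^ b) u"
    by (auto simp: desc_def)
  have "a \<noteq> b" using u c by auto
  show False
  proof (cases "a < b")
    case True
    then have "c' = (p ^^ (b - Suc a)) (p c)"
      using u funpow_split[of "Suc a" b p u] by simp
    then have "c' \<in> anc p (p c')" using c(3) by (auto simp: anc_def)
    then show False using acyclic[of c'] c by auto
  next
    case False
    then have "b < a" using \<open>a \<noteq> b\<close> by simp
    then have "c = (p ^^ (a - Suc b)) (p c')"
      using u funpow_split[of "Suc b" a p u] by simp
    then have "c \<in> anc p (p c)" using c(3) by (auto simp: anc_def)
    then show False using acyclic[of c] c by auto
  qed
qed

lemma sib_beta: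
  assumes c: "c \<in> {2..m}" "c' \<in> {2..m}" "p c = p c'" "c \<noteq> c'"
  shows "beta m p c \<noteq> beta m p c'"
  using sib_disj[OF c] beta_in[of c] beta_in[of c'] c by force

lemma desc_decomp:
  assumes i: "i \<in> {1..m}" and u: "u \<in> desc m p i" "u \<noteq> i"
  shows "\<exists>c\<in>{2..m}. p c = i \<and> u \<in> desc m p c"
proof -
  obtain k where k: "(p ^^ k) u = i" and um: "u \<in> {1..m}" using u by (auto simp: desc_def)
  have "k \<noteq> 0"
  proof
    assume "k = 0" then show False using k u by simp
  qed
  then obtain k' where k': "k = Suc k'" by (cases k) auto
  define c where "c = (p ^^ k') u"
  have pc: "p c = i" using k k' by (simp add: c_def)
  have "c \<le> m" using pow_le um by (simp add: c_def)
  moreover have "c \<noteq> 0"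
  proof assume "c = 0" then show False using pc i by simp qed
  moreover have "c \<noteq> 1"
  proof assume "c = 1" then show False using pc i by simp qed
  ultimately have "c \<in> {2..m}" by auto
  moreover have "u \<in> desc m p c" using um by (auto simp: desc_def c_def)
  ultimately show ?thesis using pc by blast
qed

lemma pow_in: assumes "i \<in> {1..m}" "k \<le> depth p i" shows "(p ^^ k) i \<in> {1..m}"
proof -
  have "(p ^^ k) i \<noteq> 0"
  proof
    assume h: "(p ^^ k) i = 0"
    have "(p ^^ depth p i) i = (p ^^ (depth p i - k)) ((p ^^ k) i)"
      using assms(2) by (rule funpow_split)
    also have "\<dots> = 0" using h pow0 by simp
    finally show False using depth_ex[OF assms(1)] by simp
  qed
  then show ?thesis using pow_le[of i k] assms(1) by auto
qed

lemma root_child: "u \<in> {2..m} \<Longrightarrow> \<exists>c\<in>{2..m}. p c = 1"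
proof -
  assume "u \<in> {2..m}"
  then have "u \<in> {1..m}" "u \<noteq> 1" by auto
  then show ?thesis
  proof (induction u rule: anc_induct)
    case (step u)
    show ?case
    proof (cases "p u = 1")
      case True then show ?thesis using step by auto
    next
      case False
      have "p u \<in> {1..m}" using p_in step by auto
      then show ?thesis using step.IH[of "p u"] False anc_self by blast
    qed
  qed
qed

lemma root_deg_pos: "2 \<le> m \<Longrightarrow> 1 \<le> root_deg m p"
  unfolding root_deg_def using root_child[of 2]
  by (simp add: card_gt_0_iff[symmetric]) (auto simp: Suc_le_eq card_gt_0_iff)

definition Iset where "Iset = {j \<in> {2..m}. p j > beta m p j}"
definition Pset where "Pset = {i \<in> {1..m}. \<exists>j\<in>{2..m}. p j = i \<and> i > beta m p j}"
definition Dset where "Dset = {j \<in> {2..m}. p j = 1}"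

lemma impe_Iset: "impe m p = card Iset" by (simp add: impe_def Iset_def)
lemma impp_Pset: "impp m p = card Pset" by (simp add: impp_def Pset_def)
lemma deg_Dset: "root_deg m p = card Dset" by (simp add: root_deg_def Dset_def)

lemma Pset_img: "Pset = p ` Iset"
  using p_in by (auto simp: Pset_def Iset_def)

lemma impp_le_impe: "impp m p \<le> impe m p"
  unfolding impp_Pset impe_Iset Pset_img by (rule card_image_le) (simp add: Iset_def)

lemma Iset_Dset: "Iset \<inter> Dset = {}"
proof -
  have "j \<notin> Dset" if "j \<in> Iset" for j
  proof -
    have "j \<in> {1..m}" "p j > beta m p j" using that by (auto simp: Iset_def)
    then have "p j \<noteq> 1" using beta_range[of j] by auto
    then show ?thesis by (simp add: Dset_def)
  qed
  then show ?thesis by blast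
qed

lemma impe_deg: assumes "1 \<le> m" shows "impe m p + root_deg m p + 1 \<le> m"
proof -
  have "Iset \<union> Dset \<subseteq> {2..m}" by (auto simp: Iset_def Dset_def)
  then have "card (Iset \<union> Dset) \<le> m - 1" using card_mono[of "{2..m}"] by fastforce
  moreover have "card (Iset \<union> Dset) = card Iset + card Dset"
    using Iset_Dset by (intro card_Un_disjoint) (auto simp: Iset_def Dset_def)
  ultimately show ?thesis unfolding impe_Iset deg_Dset using assms by linarith
qed

definition gq where "gq i = (GREATEST q. q \<le> depth p i \<and> (\<forall>k\<le>q. i \<le> (p ^^ k) i))"

lemma gap_top_gq: "gap_top p i = (p ^^ gq i) i"
  by (simp add: gap_top_def gq_def)

lemma gq_prop: "gq i \<le> depth p i \<and> (\<forall>k\<le>gq i. i \<le> (p ^^ k) i)"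
  unfolding gq_def by (rule GreatestI_nat[where k=0 and b="depth p i"]) auto

lemma gq_max: "q \<le> depth p i \<Longrightarrow> (\<forall>k\<le>q. i \<le> (p ^^ k) i) \<Longrightarrow> q \<le> gq i"
  unfolding gq_def by (rule Greatest_le_nat[where b="depth p i"]) auto

lemma gq_stop:
  assumes "gq i < depth p i" shows "(p ^^ Suc (gq i)) i < i"
proof (rule ccontr)
  assume "\<not> (p ^^ Suc (gq i)) i < i"
  then have "\<forall>k\<le>Suc (gq i). i \<le> (p ^^ k) i" using gq_prop[of i] by (auto simp: le_Suc_eq)
  then have "Suc (gq i) \<le> gq i" using gq_max[of "Suc (gq i)" i] assms by simp
  then show False by simp
qed

lemma gap_in: "i \<in> {1..m} \<Longrightarrow> gap_top p i \<in> {1..m}"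
  using gq_prop pow_in by (simp add: gap_top_gq)

lemma lead_G:
  assumes "1 \<le> m"
  shows "lead m p = card {u \<in> {1..m}. u = 1 \<or> p u < beta m p u}"
proof -
  let ?L = "{i \<in> {1..m}. leading m p i}"
  let ?G = "{u \<in> {1..m}. u = 1 \<or> p u < beta m p u}"
  have A: "gap_top p i \<in> ?G" if "i \<in> ?L" for i
  proof -
    have i: "i \<in> {1..m}" "beta m p (gap_top p i) = i" using that by (auto simp: leading_def)
    show ?thesis
    proof (cases "gq i < depth p i")
      case True
      have "p (gap_top p i) = (p ^^ Suc (gq i)) i" by (simp add: gap_top_gq)
      then have "p (gap_top p i) < beta m p (gap_top p i)" using gq_stop[OF True] i by simp
      then show ?thesis using gap_in[OF i(1)] by simp
    next
      case False
      then have "gq i = depth p i" using gq_prop[of i] by simp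
      then have "gap_top p i = 1" using depth_ex[OF i(1)] by (simp add: gap_top_gq)
      then show ?thesis using assms by simp
    qed
  qed
  have B: "beta m p u \<in> ?L \<and> gap_top p (beta m p u) = u" if "u \<in> ?G" for u
  proof -
    have u: "u \<in> {1..m}" "u = 1 \<or> p u < beta m p u" using that by auto
    define i where "i = beta m p u"
    have "i \<in> desc m p u" using beta_in[OF u(1)] by (simp add: i_def)
    then obtain k where k: "(p ^^ k) i = u" and im: "i \<in> {1..m}" by (auto simp: desc_def)
    have kd: "k \<le> depth p i" using anc_depth[OF im k[symmetric] u(1)] by simp
    have path: "i \<le> (p ^^ l) i" if "l \<le> k" for l
    proof -
      have w: "(p ^^ l) i \<in> {1..m}" using pow_in[OF im] that kd by simp
      have "(p ^^ (k - l)) ((p ^^ l) i) = u" using k funpow_split[OF that, of p i] by simp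
      then have "(p ^^ l) i \<in> desc m p u" using w by (auto simp: desc_def)
      then show ?thesis unfolding i_def by (rule beta_le)
    qed
    have kq: "k \<le> gq i" using gq_max[OF kd] path by blast
    have "k = gq i"
    proof (rule ccontr)
      assume "k \<noteq> gq i"
      then have lt: "Suc k \<le> gq i" using kq by simp
      then have ge: "i \<le> (p ^^ Suc k) i" using gq_prop[of i] by blast
      have pu: "(p ^^ Suc k) i = p u" using k by simp
      have "Suc k \<le> depth p i" using lt gq_prop[of i] by simp
      then have "(p ^^ Suc k) i \<in> {1..m}" by (rule pow_in[OF im])
      then have "u \<noteq> 1" using pu by auto
      then have "p u < i" using u(2) by (simp add: i_def)
      then show False using ge pu by simp
    qed
    then have gt: "gap_top p i = u" using k by (simp add: gap_top_gq)
    then show ?thesis using im by (simp add: leading_def i_def)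
  qed
  have "bij_betw (gap_top p) ?L ?G"
  proof (rule bij_betw_byWitness[where f'="beta m p"])
    show "\<forall>a\<in>?L. beta m p (gap_top p a) = a" by (simp add: leading_def)
    show "\<forall>a'\<in>?G. gap_top p (beta m p a') = a'" using B by blast
    show "gap_top p ` ?L \<subseteq> ?G" using A by blast
    show "beta m p ` ?G \<subseteq> ?L" using B by blast
  qed
  then have "card ?L = card ?G" by (rule bij_betw_same_card)
  then show ?thesis by (simp add: lead_def)
qed

lemma lead_eq: assumes "1 \<le> m" shows "lead m p = m - impe m p"
proof -
  let ?G = "{u \<in> {1..m}. u = 1 \<or> p u < beta m p u}"
  have "?G = insert 1 ({2..m} - Iset)"
    using beta_ne_par assms by (force simp: Iset_def)
  then have "card ?G = 1 + card ({2..m} - Iset)" by simp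
  also have "card ({2..m} - Iset) = card {2..m} - card Iset"
    by (rule card_Diff_subset) (auto simp: Iset_def)
  finally show ?thesis using lead_G[OF assms] assms impe_deg[OF assms] by (simp add: impe_Iset)
qed

end

lemma finite_ct: "finite (cayley_trees m)"
proof -
  let ?f = "\<lambda>p::nat\<Rightarrow>nat. map p [0..<Suc m]"
  have "inj_on ?f (cayley_trees m)"
  proof (rule inj_onI)
    fix p q assume p: "p \<in> cayley_trees m" and q: "q \<in> cayley_trees m" and e: "?f p = ?f q"
    show "p = q"
    proof
      fix v
      show "p v = q v"
      proof (cases "v \<le> m")
        case True
        then have "v \<in> set [0..<Suc m]" by (simp only: set_upt atLeastLessThan_iff) linarith
        moreover have "\<forall>x\<in>set [0..<Suc m]. p x = q x" using e by (simp only: map_eq_conv)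
        ultimately show ?thesis by blast
      next
        case False
        then show ?thesis using p q by (auto simp: cayley_trees_def)
      qed
    qed
  qed
  moreover have "?f ` cayley_trees m \<subseteq> {xs. set xs \<subseteq> {0..m} \<and> length xs = Suc m}"
  proof -
    have "p v \<le> m" if "p \<in> cayley_trees m" for p v
      using ctree.p_le[of m p v] ctree.p_out[of m p v] that by (cases "v \<le> m") (auto simp: ctree_def)
    then show ?thesis by auto
  qed
  moreover have "finite {xs. set xs \<subseteq> {0..m} \<and> length xs = Suc m}"
    by (rule finite_lists_length_eq) simp
  ultimately have "finite (?f ` cayley_trees m)" "inj_on ?f (cayley_trees m)"
    using finite_subset by blast+
  then show ?thesis by (rule finite_imageD)
qed


definition insg :: "nat \<Rightarrow> (nat \<Rightarrow> nat) \<Rightarrow> nat \<Rightarrow> nat set \<Rightarrow> nat \<Rightarrow> nat" where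
  "insg m p i S = (\<lambda>v. if v = Suc m then p i else if v = i then Suc m else if v \<in> S then Suc m else p v)"

locale ins_ctx = ctree +
  fixes i :: nat and S :: "nat set"
  assumes i: "i \<in> {2..m}" and S: "S \<subseteq> {c \<in> {2..m}. p c = i}"
begin

abbreviation "N \<equiv> Suc m"
abbreviation "q \<equiv> insg m p i S"

lemma iS: "i \<notin> S" using S p_neq[of i] i by auto
lemma iN: "i \<noteq> N" "i \<in> {1..m}" using i by auto
lemma SN: "N \<notin> S" "S \<subseteq> {2..m}" using S by auto
lemma pi: "p i \<in> {1..m}" using p_in i by auto

lemma qN[simp]: "q N = p i" by (simp add: insg_def)
lemma qi[simp]: "q i = N" using iN by (simp add: insg_def)
lemma qS: "c \<in> S \<Longrightarrow> q c = N" using SN iN iS by (auto simp: insg_def)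
lemma qo: "v \<noteq> N \<Longrightarrow> v \<noteq> i \<Longrightarrow> v \<notin> S \<Longrightarrow> q v = p v" by (simp add: insg_def)

lemma q0[simp]: "q 0 = 0" using iN SN by (auto simp: insg_def)
lemma ancq0[simp]: "anc q 0 = {0}" by (rule anc_fix) simp

lemma S_not_anc_pi: "c \<in> S \<Longrightarrow> c \<notin> anc p (p i)"
  using S acyclic[of i] iN anc_closed[of c p "p i"] by auto

lemma anc_q:
  assumes "u \<in> {1..m}"
  shows "anc q u = (anc p u \<union> (if i \<in> anc p u then {N} else {})) - (if \<exists>c\<in>S. c \<in> anc p u then {i} else {})"
  using assms
proof (induction u rule: anc_induct)
  case (step u)
  have X: "anc q (p i) = anc p (p i)" if "p i \<in> anc p (p u)"
    using step.IH[OF that pi] acyclic[OF iN(2)] S_not_anc_pi by auto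
  have "u \<in> {1..m}" using step by blast
  then have "u = 1 \<or> u \<in> {2..m}" by auto
  then consider "u = 1" | "u \<in> {2..m}" "u \<noteq> i" "u \<notin> S" | "u = i" | "u \<in> S"
    by blast
  then show ?case
  proof cases
    case 1
    have "q 1 = 0" using i SN by (auto simp: insg_def)
    then have "anc q 1 = {1, 0}" by (subst anc_step) simp
    then show ?thesis using 1 i SN by auto
  next
    case 2
    have qu: "q u = p u" using 2 by (intro qo) auto
    have pu: "p u \<in> {1..m}" using p_in 2 by auto
    have IH: "anc q (p u) = (anc p (p u) \<union> (if i \<in> anc p (p u) then {N} else {})) - (if \<exists>c\<in>S. c \<in> anc p (p u) then {i} else {})"
      using step.IH[OF anc_self pu] .
    have e1: "anc q u = insert u (anc q (p u))" using qu anc_step[of q u] by simp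
    have e2: "anc p u = insert u (anc p (p u))" by (rule anc_step)
    show ?thesis unfolding e1 e2 IH using 2 by auto
  next
    case 3
    have "anc q i = insert i (insert N (anc q (p i)))"
      using anc_step[of q i] anc_step[of q N] by simp
    also have "anc q (p i) = anc p (p i)" using X 3 anc_self by blast
    finally have e1: "anc q i = insert i (insert N (anc p (p i)))" .
    have "\<not> (\<exists>c\<in>S. c \<in> anc p i)" using S_not_anc_pi iS anc_step[of p i] by auto
    then show ?thesis using 3 e1 anc_step[of p i] by auto
  next
    case 4
    have pu: "p u = i" using 4 S by auto
    have "anc q u = insert u (insert N (anc q (p i)))"
      using anc_step[of q u] anc_step[of q N] qS[OF 4] by simp
    also have "anc q (p i) = anc p (p i)" using X pu anc_step[of p i] anc_self[of "p i"] by auto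
    finally have e1: "anc q u = insert u (insert N (anc p (p i)))" .
    have e2: "anc p u = insert u (insert i (anc p (p i)))"
      using anc_step[of p u] anc_step[of p i] pu by simp
    have "i \<notin> anc p (p i)" using acyclic iN by auto
    then show ?thesis using e1 e2 4 iS iN by auto
  qed
qed

lemma anc_qN: "anc q N = insert N (anc p (p i))"
proof -
  have "anc q (p i) = anc p (p i)"
    using anc_q[OF pi] acyclic[OF iN(2)] S_not_anc_pi by auto
  then show ?thesis using anc_step[of q N] by simp
qed

lemma q_ct: "q \<in> cayley_trees N"
  unfolding cayley_trees_def
proof (intro CollectI conjI ballI allI impI)
  fix v assume "v \<notin> {2..N}"
  then show "q v = 0" using i SN p_out[of v] by (auto simp: insg_def)
next
  fix v assume "v \<in> {2..N}"
  then show "q v \<in> {1..N}" using pi p_in[of v] by (auto simp: insg_def)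
next
  fix v assume v: "v \<in> {1..N}"
  show "\<exists>k. (q ^^ k) v = 1"
  proof (cases "v = N")
    case True
    have "1 \<in> anc q N" using anc_qN reach[OF pi] by auto
    then show ?thesis by (simp add: True anc_ex)
  next
    case False
    then have "v \<in> {1..m}" using v by auto
    then have "1 \<in> anc q v" using anc_q[of v] reach[of v] i by auto
    then show ?thesis by (simp add: anc_ex)
  qed
qed

sublocale Q: ctree N q by (unfold_locales) (rule q_ct)

lemma anc_p_le: "u \<in> {1..m} \<Longrightarrow> N \<notin> anc p u"
  using anc_le[of u] by auto

lemma desc_q_other:
  assumes w: "w \<in> {1..m}" "w \<noteq> i"
  shows "desc N q w = desc m p w \<union> (if w \<in> anc q N then {N} else {})"
proof -
  have "w \<in> anc q u \<longleftrightarrow> w \<in> anc p u" if "u \<in> {1..m}" for u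
    using anc_q[OF that] w by auto
  then show ?thesis unfolding desc_anc by (auto simp: le_Suc_eq)
qed

lemma Min_ins_big: "finite D \<Longrightarrow> D \<noteq> {} \<Longrightarrow> \<forall>d\<in>D. d < x \<Longrightarrow> Min (D \<union> {x}) = Min D"
  by (simp add: min_def) (metis Min_in less_le_not_le)

lemma beta_q_other:
  assumes w: "w \<in> {1..m}" "w \<noteq> i"
  shows "beta N q w = beta m p w"
proof -
  have ne: "desc m p w \<noteq> {}" using desc_self[OF w(1)] by auto
  have lt: "\<forall>d\<in>desc m p w. d < N" using desc_sub[of w] by (meson atLeastAtMost_iff le_imp_less_Suc subsetD)
  show ?thesis unfolding beta_def desc_q_other[OF w]
    using Min_ins_big[OF desc_fin ne lt] by auto
qed

definition DS where "DS = {u. \<exists>c\<in>S. c \<in> anc p u}"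

lemma desc_q_i: "desc N q i = desc m p i - DS"
proof -
  have "i \<in> anc q u \<longleftrightarrow> i \<in> anc p u \<and> u \<notin> DS" if "u \<in> {1..m}" for u
    using anc_q[OF that] iN by (auto simp: DS_def)
  moreover have "i \<notin> anc q N" using anc_qN acyclic[OF iN(2)] iN by auto
  ultimately show ?thesis unfolding desc_anc by (auto simp: le_Suc_eq)
qed

lemma desc_q_N: "desc N q N = insert N (desc m p i)"
proof -
  have "N \<in> anc q u \<longleftrightarrow> i \<in> anc p u" if "u \<in> {1..m}" for u
    using anc_q[OF that] anc_p_le[OF that] iN by auto
  then show ?thesis unfolding desc_anc using anc_self[of N q] by (auto simp: le_Suc_eq)
qed

lemma beta_q_N: "beta N q N = beta m p i"
proof -
  have ne: "desc m p i \<noteq> {}" using desc_self[OF iN(2)] by auto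
  have lt: "\<forall>d\<in>desc m p i. d < N" using desc_sub[of i] by (meson atLeastAtMost_iff le_imp_less_Suc subsetD)
  show ?thesis unfolding beta_def desc_q_N
    using Min_ins_big[OF desc_fin ne lt] by simp
qed

lemma beta_q_S: assumes "c \<in> S" shows "beta N q c = beta m p c"
proof -
  have "c \<in> {1..m}" "c \<noteq> i" using SN iS assms by auto
  then show ?thesis by (rule beta_q_other)
qed


lemma Iset_fin: "finite Iset" by (rule finite_subset[of _ "{2..m}"]) (auto simp: Iset_def)
lemma Pset_fin: "finite Pset" by (rule finite_subset[of _ "{1..m}"]) (auto simp: Pset_def)
lemma Dset_fin: "finite Dset" by (rule finite_subset[of _ "{2..m}"]) (auto simp: Dset_def)

lemma beta_q_i_lt: "beta N q i < N"
  using Q.beta_le_self[of i] iN by auto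

lemma Q_Iset:
  assumes Simp: "\<forall>c\<in>S. beta m p c < i"
  shows "Q.Iset = insert i Iset \<union> (if i \<in> Iset then {N} else {})"
proof (rule set_eqI)
  fix j
  consider "j = N" | "j = i" | "j \<in> S" | "j \<noteq> N" "j \<noteq> i" "j \<notin> S" by blast
  then show "j \<in> Q.Iset \<longleftrightarrow> j \<in> insert i Iset \<union> (if i \<in> Iset then {N} else {})"
  proof cases
    case 1
    have "N \<notin> Iset" by (auto simp: Iset_def)
    then show ?thesis using 1 beta_q_N i by (auto simp: Q.Iset_def Iset_def)
  next
    case 2
    then show ?thesis using beta_q_i_lt i by (auto simp: Q.Iset_def)
  next
    case 3
    have j: "beta m p j < i" "p j = i" "j \<in> {2..m}" using 3 Simp S by auto
    then have "j \<in> Iset" by (auto simp: Iset_def)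
    moreover have "beta N q j < N" using beta_q_S[OF 3] beta_le_self[of j] j by auto
    ultimately show ?thesis using 3 qS[OF 3] j by (auto simp: Q.Iset_def)
  next
    case 4
    then have qj: "q j = p j" by (rule qo)
    show ?thesis
    proof (cases "j \<in> {2..m}")
      case True
      then have "beta N q j = beta m p j" using 4 by (intro beta_q_other) auto
      then show ?thesis using True qj 4 by (auto simp: Q.Iset_def Iset_def)
    next
      case False
      then show ?thesis using 4 by (auto simp: Q.Iset_def Iset_def)
    qed
  qed
qed

lemma impe_q:
  assumes Simp: "\<forall>c\<in>S. beta m p c < i"
  shows "impe N q = impe m p + 1"
proof -
  have NI: "N \<notin> Iset" by (auto simp: Iset_def)
  show ?thesis
  proof (cases "i \<in> Iset")
    case True
    then have "Q.Iset = insert N Iset" using Q_Iset[OF Simp] by auto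
    then show ?thesis using Iset_fin NI by (simp add: Q.impe_Iset impe_Iset)
  next
    case False
    then have "Q.Iset = insert i Iset" using Q_Iset[OF Simp] by auto
    then show ?thesis using Iset_fin False by (simp add: Q.impe_Iset impe_Iset)
  qed
qed

definition cond where "cond \<longleftrightarrow> (\<exists>j\<in>{2..m}. j \<notin> S \<and> p j = i \<and> beta m p j < i)"

lemma Q_Pset: "Q.Pset = insert N (if cond then Pset else Pset - {i})"
proof (rule set_eqI)
  fix v
  have piv: "p i \<noteq> i" using p_neq iN by auto
  consider "v = N" | "v = i" | "v \<in> {1..m}" "v \<noteq> i" | "v \<notin> {1..N}" by force
  then show "v \<in> Q.Pset \<longleftrightarrow> v \<in> insert N (if cond then Pset else Pset - {i})"
  proof cases
    case 1
    have "i \<in> {2..N}" using i by auto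
    then show ?thesis using 1 beta_q_i_lt by (auto simp: Q.Pset_def intro!: bexI[of _ i])
  next
    case 2
    have "(\<exists>j\<in>{2..N}. q j = i \<and> beta N q j < i) \<longleftrightarrow> cond"
    proof
      assume "\<exists>j\<in>{2..N}. q j = i \<and> beta N q j < i"
      then obtain j where j: "j \<in> {2..N}" "q j = i" "beta N q j < i" by blast
      have "j \<noteq> N" using j piv by auto
      moreover have "j \<noteq> i" using j iN by auto
      moreover have "j \<notin> S" using j qS iN by auto
      ultimately have "q j = p j" "j \<in> {2..m}" "beta N q j = beta m p j"
        using j qo beta_q_other[of j] by auto
      then have "p j = i" "beta m p j < i" using j by auto
      then show cond unfolding cond_def using \<open>j \<in> {2..m}\<close> \<open>j \<notin> S\<close> by blast
    next
      assume cond
      then obtain j where j: "j \<in> {2..m}" "j \<notin> S" "p j = i" "beta m p j < i" by (auto simp: cond_def)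
      have "j \<noteq> i" using j piv by auto
      then have "q j = p j" "beta N q j = beta m p j" using j qo beta_q_other[of j] by auto
      then show "\<exists>j\<in>{2..N}. q j = i \<and> beta N q j < i" using j by (intro bexI[of _ j]) auto
    qed
    moreover have "cond \<Longrightarrow> i \<in> Pset" using iN by (auto simp: cond_def Pset_def)
    ultimately show ?thesis using 2 iN by (auto simp: Q.Pset_def)
  next
    case 3
    have "(\<exists>j\<in>{2..N}. q j = v \<and> beta N q j < v) \<longleftrightarrow> (\<exists>j\<in>{2..m}. p j = v \<and> beta m p j < v)"
    proof
      assume "\<exists>j\<in>{2..N}. q j = v \<and> beta N q j < v"
      then obtain j where j: "j \<in> {2..N}" "q j = v" "beta N q j < v" by blast
      show "\<exists>j\<in>{2..m}. p j = v \<and> beta m p j < v"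
      proof (cases "j = N")
        case True
        then show ?thesis using j beta_q_N i by (intro bexI[of _ i]) auto
      next
        case False
        have "j \<noteq> i" using j 3 by auto
        moreover have "j \<notin> S" using j qS 3 by auto
        ultimately have "q j = p j" "j \<in> {2..m}" "beta N q j = beta m p j"
          using j False qo beta_q_other[of j] by auto
        then show ?thesis using j by auto
      qed
    next
      assume "\<exists>j\<in>{2..m}. p j = v \<and> beta m p j < v"
      then obtain j where j: "j \<in> {2..m}" "p j = v" "beta m p j < v" by blast
      show "\<exists>j\<in>{2..N}. q j = v \<and> beta N q j < v"
      proof (cases "j = i")
        case True
        then show ?thesis using j beta_q_N by (intro bexI[of _ N]) auto
      next
        case False
        have "j \<notin> S" using j S 3 by auto
        then have "q j = p j" "beta N q j = beta m p j" using j False qo beta_q_other[of j] by auto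
        then show ?thesis using j by (intro bexI[of _ j]) auto
      qed
    qed
    then show ?thesis using 3 by (auto simp: Q.Pset_def Pset_def)
  next
    case 4
    then show ?thesis by (auto simp: Q.Pset_def Pset_def)
  qed
qed

lemma impp_q: "impp N q = card (if cond then Pset else Pset - {i}) + 1"
proof -
  have "N \<notin> (if cond then Pset else Pset - {i})" by (auto simp: Pset_def)
  moreover have "finite (if cond then Pset else Pset - {i})" using Pset_fin by auto
  ultimately show ?thesis by (simp add: Q.impp_Pset Q_Pset)
qed

lemma Q_Dset: "Q.Dset = (if p i = 1 then insert N (Dset - {i}) else Dset)"
proof (rule set_eqI)
  fix j
  consider "j = N" | "j = i" | "j \<in> S" | "j \<noteq> N" "j \<noteq> i" "j \<notin> S" by blast
  then show "j \<in> Q.Dset \<longleftrightarrow> j \<in> (if p i = 1 then insert N (Dset - {i}) else Dset)"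
  proof cases
    case 1
    then show ?thesis using i by (auto simp: Q.Dset_def Dset_def)
  next
    case 2
    then show ?thesis using i by (auto simp: Q.Dset_def Dset_def)
  next
    case 3
    then show ?thesis using qS[OF 3] S i by (auto simp: Q.Dset_def Dset_def)
  next
    case 4
    then have "q j = p j" by (rule qo)
    then show ?thesis using 4 by (auto simp: Q.Dset_def Dset_def)
  qed
qed

lemma deg_q: "root_deg N q = root_deg m p"
proof (cases "p i = 1")
  case True
  then have "i \<in> Dset" using i by (auto simp: Dset_def)
  moreover have "N \<notin> Dset" by (auto simp: Dset_def)
  moreover have "card Dset > 0" using Dset_fin \<open>i \<in> Dset\<close> card_gt_0_iff by blast
  ultimately show ?thesis using True Dset_fin
    by (simp add: Q.deg_Dset deg_Dset Q_Dset card_insert_if)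
next
  case False
  then show ?thesis by (simp add: Q.deg_Dset deg_Dset Q_Dset)
qed

end


lemma Min_ins_big': "finite D \<Longrightarrow> D \<noteq> {} \<Longrightarrow> \<forall>d\<in>D. d < x \<Longrightarrow> Min (D \<union> {x}) = Min D"
  by (simp add: min_def) (metis Min_in less_le_not_le)

locale leaf_ctx = ctree +
  fixes v :: nat
  assumes v: "v \<in> {1..m}"
begin

abbreviation "N \<equiv> Suc m"
abbreviation "q \<equiv> p(N := v)"

lemma pow_q: "u \<le> m \<Longrightarrow> (q ^^ k) u = (p ^^ k) u"
proof (induction k)
  case 0 then show ?case by simp
next
  case (Suc k)
  have "(p ^^ k) u \<le> m" using pow_le Suc.prems by blast
  then show ?case using Suc by simp
qed

lemma anc_q: "u \<le> m \<Longrightarrow> anc q u = anc p u"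
  using pow_q by (simp add: anc_def)

lemma anc_qN: "anc q N = insert N (anc p v)"
  using anc_step[of q N] anc_q[of v] v by simp

lemma q_ct: "q \<in> cayley_trees N"
  unfolding cayley_trees_def
proof (intro CollectI conjI ballI allI impI)
  fix w assume "w \<notin> {2..N}"
  then show "q w = 0" using p_out[of w] v by auto
next
  fix w assume "w \<in> {2..N}"
  then show "q w \<in> {1..N}" using v p_in[of w] by (cases "w = N") auto
next
  fix w assume w: "w \<in> {1..N}"
  show "\<exists>k. (q ^^ k) w = 1"
  proof (cases "w = N")
    case True
    have "1 \<in> anc q N" using anc_qN reach[OF v] by auto
    then show ?thesis by (simp add: True anc_ex)
  next
    case False
    then have "w \<in> {1..m}" using w by auto
    then have "1 \<in> anc q w" using anc_q[of w] reach[of w] by auto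
    then show ?thesis by (simp add: anc_ex)
  qed
qed

sublocale Q: ctree N q by (unfold_locales) (rule q_ct)

lemma desc_q: "w \<in> {1..m} \<Longrightarrow> desc N q w = desc m p w \<union> (if w \<in> anc q N then {N} else {})"
  unfolding desc_anc using anc_q by (auto simp: le_Suc_eq)

lemma beta_q: assumes w: "w \<in> {1..m}" shows "beta N q w = beta m p w"
proof -
  have ne: "desc m p w \<noteq> {}" using desc_self[OF w] by auto
  have lt: "\<forall>d\<in>desc m p w. d < N" using desc_sub[of w] by (meson atLeastAtMost_iff le_imp_less_Suc subsetD)
  show ?thesis unfolding beta_def desc_q[OF w]
    using Min_ins_big'[OF desc_fin ne lt] by auto
qed

lemma desc_qN: "desc N q N = {N}"
proof -
  have "N \<notin> anc q u" if "u \<in> {1..m}" for u using anc_q[of u] anc_le[of u] that by auto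
  then show ?thesis unfolding desc_anc using anc_self[of N q] by (auto simp: le_Suc_eq)
qed

lemma beta_qN: "beta N q N = N"
  unfolding beta_def desc_qN by simp

lemma Q_Iset: "Q.Iset = Iset"
  using beta_q beta_qN v by (auto simp: Q.Iset_def Iset_def le_Suc_eq)

lemma Q_Pset: "Q.Pset = Pset"
proof -
  have "(\<exists>j\<in>{2..N}. q j = w \<and> beta N q j < w) \<longleftrightarrow> (\<exists>j\<in>{2..m}. p j = w \<and> beta m p j < w)"
    if "w \<in> {1..N}" for w
  proof
    assume "\<exists>j\<in>{2..N}. q j = w \<and> beta N q j < w"
    then obtain j where j: "j \<in> {2..N}" "q j = w" "beta N q j < w" by blast
    have "j \<noteq> N" using j beta_qN v by auto
    then show "\<exists>j\<in>{2..m}. p j = w \<and> beta m p j < w" using j beta_q[of j] by auto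
  next
    assume "\<exists>j\<in>{2..m}. p j = w \<and> beta m p j < w"
    then obtain j where j: "j \<in> {2..m}" "p j = w" "beta m p j < w" by blast
    then show "\<exists>j\<in>{2..N}. q j = w \<and> beta N q j < w" using beta_q[of j] by (intro bexI[of _ j]) auto
  qed
  moreover have "N \<notin> Pset" by (auto simp: Pset_def)
  moreover have "q j \<noteq> N" if "j \<in> {2..N}" for j
    using that v p_le[of j] by (cases "j = N") auto
  then have "N \<notin> Q.Pset" by (auto simp: Q.Pset_def)
  ultimately show ?thesis
  proof (intro set_eqI)
    fix w
    assume eq: "\<And>w. w \<in> {1..N} \<Longrightarrow> (\<exists>j\<in>{2..N}. q j = w \<and> beta N q j < w) \<longleftrightarrow> (\<exists>j\<in>{2..m}. p j = w \<and> beta m p j < w)"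
      and n1: "N \<notin> Pset" and n2: "N \<notin> Q.Pset"
    show "w \<in> Q.Pset \<longleftrightarrow> w \<in> Pset"
    proof (cases "w = N")
      case True then show ?thesis using n1 n2 by simp
    next
      case False
      then have "w \<in> {1..N} \<longleftrightarrow> w \<in> {1..m}" by auto
      then show ?thesis using eq[of w] unfolding Q.Pset_def Pset_def by blast
    qed
  qed
qed

lemma Q_Dset: "Q.Dset = (if v = 1 then insert N Dset else Dset)"
  using v by (auto simp: Q.Dset_def Dset_def le_Suc_eq)

lemma impe_q: "impe N q = impe m p"
  by (simp add: Q.impe_Iset impe_Iset Q_Iset)

lemma impp_q: "impp N q = impp m p"
  by (simp add: Q.impp_Pset impp_Pset Q_Pset)

lemma deg_q: "root_deg N q = root_deg m p + (if v = 1 then 1 else 0)"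
proof -
  have "N \<notin> Dset" by (auto simp: Dset_def)
  moreover have "finite Dset" by (rule finite_subset[of _ "{2..m}"]) (auto simp: Dset_def)
  ultimately show ?thesis by (simp add: Q.deg_Dset deg_Dset Q_Dset)
qed

end


definition amax :: "(nat \<Rightarrow> nat) \<Rightarrow> nat set \<Rightarrow> nat" where
  "amax f A = (SOME a. a \<in> A \<and> (\<forall>b\<in>A. f b \<le> f a))"

lemma amax_ex:
  assumes "finite A" "A \<noteq> {}"
  shows "amax f A \<in> A \<and> (\<forall>b\<in>A. f b \<le> f (amax f A))"
proof -
  have "Max (f ` A) \<in> f ` A" using Max_in[of "f ` A"] assms by auto
  then obtain a where a: "a \<in> A" "f a = Max (f ` A)" by force
  then have "a \<in> A \<and> (\<forall>b\<in>A. f b \<le> f a)" using assms by auto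
  then show ?thesis unfolding amax_def by (rule someI)
qed

lemma amax_eq:
  assumes "a \<in> A" "\<forall>b\<in>A. b \<noteq> a \<longrightarrow> f b < f a"
  shows "amax f A = a"
  unfolding amax_def
proof (rule some_equality)
  show "a \<in> A \<and> (\<forall>b\<in>A. f b \<le> f a)" using assms by (metis less_imp_le order_refl)
next
  fix b assume "b \<in> A \<and> (\<forall>c\<in>A. f c \<le> f b)"
  then show "b = a" using assms by (meson leD)
qed

definition chN :: "nat \<Rightarrow> (nat \<Rightarrow> nat) \<Rightarrow> nat set" where
  "chN m q = {c \<in> {2..Suc m}. q c = Suc m}"
definition iv :: "nat \<Rightarrow> (nat \<Rightarrow> nat) \<Rightarrow> nat" where
  "iv m q = amax (beta (Suc m) q) (chN m q)"
definition Sv :: "nat \<Rightarrow> (nat \<Rightarrow> nat) \<Rightarrow> nat set" where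
  "Sv m q = chN m q - {iv m q}"
definition remp :: "nat \<Rightarrow> (nat \<Rightarrow> nat) \<Rightarrow> nat \<Rightarrow> nat" where
  "remp m q = (if chN m q = {} then q(Suc m := 0)
     else (\<lambda>v. if v = Suc m then 0 else if v = iv m q then q (Suc m)
                else if v \<in> Sv m q then iv m q else q v))"

datatype pos = Lf nat | Sb nat | Mv nat

definition rpos :: "nat \<Rightarrow> (nat \<Rightarrow> nat) \<Rightarrow> pos" where
  "rpos m q = (if chN m q = {} then Lf (q (Suc m))
     else if Sv m q = {} then Sb (iv m q) else Mv (amax (beta (Suc m) q) (Sv m q)))"

definition Sdef :: "nat \<Rightarrow> (nat \<Rightarrow> nat) \<Rightarrow> nat \<Rightarrow> nat set" where
  "Sdef m p j = {c \<in> {2..m}. p c = p j \<and> beta m p c \<le> beta m p j}"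

fun insp :: "nat \<Rightarrow> (nat \<Rightarrow> nat) \<Rightarrow> pos \<Rightarrow> nat \<Rightarrow> nat" where
  "insp m p (Lf v) = p(Suc m := v)"
| "insp m p (Sb c) = insg m p c {}"
| "insp m p (Mv j) = insg m p (p j) (Sdef m p j)"

definition PS :: "nat \<Rightarrow> (nat \<Rightarrow> nat) \<Rightarrow> pos set" where
  "PS m p = Lf ` {1..m} \<union> Sb ` {2..m} \<union> Mv ` ctree.Iset m p"

locale rem_ctx =
  fixes m :: nat and q :: "nat \<Rightarrow> nat"
  assumes qct: "q \<in> cayley_trees (Suc m)" and m1: "1 \<le> m"
begin

abbreviation "N \<equiv> Suc m"

sublocale Q: ctree N q by unfold_locales (rule qct)

lemma qN: "q N \<in> {1..m}"
  using Q.p_in[of N] Q.p_neq[of N] m1 by auto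

lemma ch_sub: "chN m q \<subseteq> {2..m}"
  using qN by (auto simp: chN_def le_Suc_eq)

lemma ch_fin: "finite (chN m q)"
  using ch_sub finite_subset by blast

lemma q_le_notch: "u \<le> m \<Longrightarrow> u \<notin> chN m q \<Longrightarrow> q u \<le> m"
  using Q.p_le[of u] by (cases "u \<in> {2..m}") (auto simp: chN_def le_Suc_eq Q.p_out)

lemma ch_beta_inj:
  assumes "c \<in> chN m q" "c' \<in> chN m q" "c \<noteq> c'"
  shows "beta N q c \<noteq> beta N q c'"
  using assms by (intro Q.sib_beta) (auto simp: chN_def)

end

locale rem_leaf = rem_ctx +
  assumes ch0: "chN m q = {}"
begin

abbreviation "p \<equiv> q(N := 0)"

lemma pow_p: "u \<le> m \<Longrightarrow> (p ^^ k) u = (q ^^ k) u"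
proof (induction k)
  case 0 then show ?case by simp
next
  case (Suc k)
  have "(q ^^ k) u \<le> m"
  proof (induction k)
    case 0 then show ?case using Suc.prems by simp
  next
    case (Suc k) then show ?case using q_le_notch ch0 by simp
  qed
  then show ?case using Suc by simp
qed

lemma p_ct: "p \<in> cayley_trees m"
  unfolding cayley_trees_def
proof (intro CollectI conjI ballI allI impI)
  fix v assume "v \<notin> {2..m}"
  then show "p v = 0" using Q.p_out[of v] by auto
next
  fix v assume v: "v \<in> {2..m}"
  then show "p v \<in> {1..m}" using Q.p_in[of v] q_le_notch[of v] ch0 by auto
next
  fix v assume v: "v \<in> {1..m}"
  then have "1 \<in> anc q v" using Q.reach by auto
  then obtain k where "(q ^^ k) v = 1" by (auto simp: anc_def)
  then show "\<exists>k. (p ^^ k) v = 1" using pow_p[of v k] v by auto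
qed

lemma remp_eq: "remp m q = p" by (simp add: remp_def ch0)
lemma rpos_eq: "rpos m q = Lf (q N)" by (simp add: rpos_def ch0)
lemma rpos_PS: "rpos m q \<in> PS m p" using qN by (simp add: rpos_eq PS_def)
lemma ins_back: "insp m p (rpos m q) = q" by (simp add: rpos_eq)

end


locale rem_int = rem_ctx +
  assumes ch1: "chN m q \<noteq> {}"
begin

abbreviation "i \<equiv> iv m q"
abbreviation "S \<equiv> Sv m q"
abbreviation "p \<equiv> remp m q"

lemma i_ch: "i \<in> chN m q" and i_max: "\<forall>b\<in>chN m q. beta N q b \<le> beta N q i"
  using amax_ex[OF ch_fin ch1] by (auto simp: iv_def)

lemma i_in: "i \<in> {2..m}" using i_ch ch_sub by auto
lemma S_sub: "S \<subseteq> {2..m}" using ch_sub by (auto simp: Sv_def)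
lemma iS: "i \<notin> S" by (simp add: Sv_def)
lemma ch_eq: "chN m q = insert i S" using i_ch by (auto simp: Sv_def)
lemma qi: "q i = N" using i_ch by (simp add: chN_def)
lemma qS: "c \<in> S \<Longrightarrow> q c = N" by (auto simp: Sv_def chN_def)
lemma NS: "N \<notin> S" "i \<noteq> N" using S_sub i_in by auto

lemma S_lt: "c \<in> S \<Longrightarrow> beta N q c < beta N q i"
  using i_max ch_beta_inj[of c i] i_ch by (force simp: Sv_def)

lemma p_def': "p = (\<lambda>v. if v = N then 0 else if v = i then q N else if v \<in> S then i else q v)"
  by (simp add: remp_def ch1)

lemma pN[simp]: "p N = 0" by (simp add: p_def')
lemma pi[simp]: "p i = q N" using NS by (simp add: p_def')
lemma pS: "c \<in> S \<Longrightarrow> p c = i" using NS iS by (auto simp: p_def')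
lemma po: "v \<noteq> N \<Longrightarrow> v \<noteq> i \<Longrightarrow> v \<notin> S \<Longrightarrow> p v = q v" by (simp add: p_def')

lemma notch: "v \<noteq> i \<Longrightarrow> v \<notin> S \<Longrightarrow> v \<notin> chN m q" using ch_eq by auto

lemma anc_p:
  assumes "u \<in> {1..N}" "u \<noteq> N"
  shows "anc p u = (anc q u - {N}) \<union> (if \<exists>c\<in>S. c \<in> anc q u then {i} else {})"
  using assms
proof (induction u rule: Q.anc_induct)
  case (step u)
  have qNm: "q N \<in> {1..N}" "q N \<noteq> N" using qN by auto
  have NnA: "N \<notin> anc q (q N)" using Q.acyclic[of N] m1 by auto
  have SnA: "\<forall>c\<in>S. c \<notin> anc q (q N)" using NnA qS anc_closed by metis
  have X: "anc p (q N) = anc q (q N)" if "q N \<in> anc q (q u)"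
    using step.IH[OF that qNm] NnA SnA by auto
  have "u \<in> {1..N}" "u \<noteq> N" using step by blast+
  then have "u = 1 \<or> u \<in> {2..m}" by auto
  then consider "u = 1" | "u \<in> {2..m}" "u \<noteq> i" "u \<notin> S" | "u = i" | "u \<in> S"
    by blast
  then show ?case
  proof cases
    case 1
    have "p 1 = 0" using i_in S_sub m1 by (auto simp: p_def')
    moreover have "p 0 = 0" using i_in S_sub by (auto simp: p_def')
    then have "anc p 0 = {0}" by (rule anc_fix)
    ultimately have "anc p 1 = {1, 0}" by (subst anc_step) simp
    then show ?thesis using 1 i_in S_sub by auto
  next
    case 2
    have pu: "p u = q u" using 2 by (intro po) auto
    have qu: "q u \<le> m" using q_le_notch[of u] notch[of u] 2 by auto
    have qu1: "q u \<in> {1..N}" "q u \<noteq> N" using qu Q.p_in[of u] 2 by auto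
    have IH: "anc p (q u) = (anc q (q u) - {N}) \<union> (if \<exists>c\<in>S. c \<in> anc q (q u) then {i} else {})"
      using step.IH[OF anc_self qu1] .
    have e1: "anc p u = insert u (anc p (q u))" using pu anc_step[of p u] by simp
    have e2: "anc q u = insert u (anc q (q u))" by (rule anc_step)
    show ?thesis unfolding e1 e2 IH using 2 by auto
  next
    case 3
    have "anc p i = insert i (anc p (q N))" using anc_step[of p i] by simp
    also have "anc p (q N) = anc q (q N)" using X 3 qi anc_closed[OF anc_self[of N q]] by simp
    finally have e1: "anc p i = insert i (anc q (q N))" .
    have e2: "anc q i = insert i (insert N (anc q (q N)))"
      using anc_step[of q i] anc_step[of q N] qi by simp
    have "\<not> (\<exists>c\<in>S. c \<in> anc q i)" using SnA iS NS e2 by auto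
    then show ?thesis using 3 e1 e2 NnA NS by auto
  next
    case 4
    have "anc p u = insert u (insert i (anc p (q N)))"
      using anc_step[of p u] anc_step[of p i] pS[OF 4] by simp
    also have "anc p (q N) = anc q (q N)" using X qS[OF 4] anc_closed[OF anc_self[of N q]] by simp
    finally have e1: "anc p u = insert u (insert i (anc q (q N)))" .
    have e2: "anc q u = insert u (insert N (anc q (q N)))"
      using anc_step[of q u] anc_step[of q N] qS[OF 4] by simp
    then show ?thesis using e1 e2 4 NnA NS by auto
  qed
qed

lemma p_ct: "p \<in> cayley_trees m"
  unfolding cayley_trees_def
proof (intro CollectI conjI ballI allI impI)
  fix v assume "v \<notin> {2..m}"
  then show "p v = 0" using Q.p_out[of v] i_in S_sub by (auto simp: p_def')
next
  fix v assume v: "v \<in> {2..m}"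
  show "p v \<in> {1..m}"
  proof (cases "v = i \<or> v \<in> S")
    case True
    then show ?thesis using qN i_in pS by auto
  next
    case False
    then show ?thesis using v Q.p_in[of v] q_le_notch[of v] notch[of v] po[of v] by auto
  qed
next
  fix v assume v: "v \<in> {1..m}"
  then have "1 \<in> anc q v" using Q.reach by auto
  then have "1 \<in> anc p v" using anc_p[of v] v by auto
  then show "\<exists>k. (p ^^ k) v = 1" by (simp add: anc_ex)
qed

sublocale P: ctree m p by unfold_locales (rule p_ct)

lemma S_ch: "S \<subseteq> {c \<in> {2..m}. p c = i}" using S_sub pS by auto

sublocale I: ins_ctx m p i S by unfold_locales (use i_in S_ch in auto)

lemma q_eq: "insg m p i S = q"
proof
  fix v show "insg m p i S v = q v"
    using qi qS po[of v] by (auto simp: insg_def)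
qed

lemma S_impr: "c \<in> S \<Longrightarrow> beta m p c < i"
proof -
  assume c: "c \<in> S"
  have "beta m p c = beta N q c" using I.beta_q_S[OF c] q_eq by simp
  also have "\<dots> < beta N q i" by (rule S_lt[OF c])
  also have "\<dots> \<le> i" using Q.beta_le_self[of i] i_in by auto
  finally show ?thesis .
qed

lemma rpos_S0: "S = {} \<Longrightarrow> rpos m q = Sb i"
  by (simp add: rpos_def ch1)

abbreviation "j \<equiv> amax (beta N q) S"

lemma rpos_S1: "S \<noteq> {} \<Longrightarrow> rpos m q = Mv j"
  by (simp add: rpos_def ch1)

lemma j_prop: "S \<noteq> {} \<Longrightarrow> j \<in> S \<and> (\<forall>b\<in>S. beta N q b \<le> beta N q j)"
  using amax_ex[of S] S_sub finite_subset by blast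

lemma beta_pq_S: "c \<in> S \<Longrightarrow> beta m p c = beta N q c"
  using I.beta_q_S q_eq by simp

lemma Sdef_eq:
  assumes S1: "S \<noteq> {}"
  shows "Sdef m p j = S" and "p j = i" and "j \<in> P.Iset"
proof -
  have jS: "j \<in> S" and jm: "\<forall>b\<in>S. beta N q b \<le> beta N q j" using j_prop[OF S1] by auto
  show pj: "p j = i" using pS[OF jS] .
  show "j \<in> P.Iset" using S_impr[OF jS] pj jS S_sub by (auto simp: P.Iset_def)
  show "Sdef m p j = S"
  proof (rule set_eqI)
    fix c
    show "c \<in> Sdef m p j \<longleftrightarrow> c \<in> S"
    proof
      assume c: "c \<in> S"
      then show "c \<in> Sdef m p j"
        using S_sub pS[OF c] pj jm beta_pq_S[OF c] beta_pq_S[OF jS] by (auto simp: Sdef_def)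
    next
      assume c: "c \<in> Sdef m p j"
      then have c1: "c \<in> {2..m}" "p c = i" "beta m p c \<le> beta m p j" using pj by (auto simp: Sdef_def)
      show "c \<in> S"
      proof (rule ccontr)
        assume cS: "c \<notin> S"
        have ci: "c \<noteq> i" using c1 P.p_neq[of i] i_in by auto
        have "q c = p c" using po[of c] ci cS c1 by auto
        then have "q c = i" using c1 by simp
        then have "beta N q i \<le> beta N q c" using Q.beta_child[of c] c1 by auto
        also have "beta N q c = beta m p c" using I.beta_q_other[of c] c1 ci q_eq by auto
        finally have "beta N q i \<le> beta m p j" using c1 by simp
        moreover have "beta N q j < beta N q i" using S_lt[OF jS] .
        ultimately show False using beta_pq_S[OF jS] by simp
      qed
    qed
  qed
qed

lemma rpos_PS: "rpos m q \<in> PS m p"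
proof (cases "S = {}")
  case True
  then show ?thesis using rpos_S0 i_in by (simp add: PS_def)
next
  case False
  then show ?thesis using rpos_S1 Sdef_eq(3) by (simp add: PS_def)
qed

lemma ins_back: "insp m p (rpos m q) = q"
proof (cases "S = {}")
  case True
  then show ?thesis using rpos_S0 q_eq by simp
next
  case False
  then show ?thesis using rpos_S1 Sdef_eq(1,2)[OF False] q_eq by simp
qed

end


context ctree
begin

lemma Sb_back:
  assumes c: "c \<in> {2..m}"
  shows "insp m p (Sb c) \<in> cayley_trees (Suc m) \<and> remp m (insp m p (Sb c)) = p \<and> rpos m (insp m p (Sb c)) = Sb c"
proof -
  interpret I: ins_ctx m p c "{}" by unfold_locales (use c in auto)
  let ?q = "insg m p c {}"
  have ch: "chN m ?q = {c}"
  proof -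
    have "c' = c" if "c' \<in> {2..Suc m}" "?q c' = Suc m" for c'
    proof (rule ccontr)
      assume h: "c' \<noteq> c"
      show False
      proof (cases "c' = Suc m")
        case True
        then have "?q c' = p c" by simp
        then show False using that p_le[of c] c by simp
      next
        case False
        then have "?q c' = p c'" using h I.qo by blast
        moreover have "c' \<le> m" using False that by simp
        ultimately show False using that p_le[of c'] by simp
      qed
    qed
    then show ?thesis using c I.qi by (auto simp: chN_def)
  qed
  have iv: "iv m ?q = c" unfolding iv_def ch by (rule amax_eq) auto
  have Sv: "Sv m ?q = {}" by (simp add: Sv_def ch iv)
  have "remp m ?q = p"
  proof
    fix v show "remp m ?q v = p v"
      using iv Sv ch p_out[of "Suc m"] by (auto simp: remp_def insg_def)
  qed
  moreover have "rpos m ?q = Sb c" by (simp add: rpos_def ch Sv iv)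
  ultimately show ?thesis using I.q_ct by simp
qed

lemma Lf_back:
  assumes v: "v \<in> {1..m}"
  shows "insp m p (Lf v) \<in> cayley_trees (Suc m) \<and> remp m (insp m p (Lf v)) = p \<and> rpos m (insp m p (Lf v)) = Lf v"
proof -
  interpret L: leaf_ctx m p v by unfold_locales (rule v)
  have ch: "chN m (p(Suc m := v)) = {}"
  proof -
    have "(p(Suc m := v)) c \<noteq> Suc m" if "c \<in> {2..Suc m}" for c
    proof (cases "c = Suc m")
      case True then show ?thesis using v by simp
    next
      case False then have "c \<le> m" using that by simp
      then show ?thesis using p_le[of c] False by simp
    qed
    then show ?thesis unfolding chN_def by blast
  qed
  have pN: "p (Suc m) = 0" using p_out[of "Suc m"] by simp
  have "remp m (p(Suc m := v)) = p"
    unfolding remp_def ch using pN by (intro ext) simp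
  moreover have "rpos m (p(Suc m := v)) = Lf v" by (simp add: rpos_def ch)
  ultimately show ?thesis using L.q_ct by simp
qed

lemma Mv_i:
  assumes j: "j \<in> Iset"
  shows "p j \<in> {2..m}" "Sdef m p j \<subseteq> {c \<in> {2..m}. p c = p j}" "j \<in> Sdef m p j"
proof -
  have j1: "j \<in> {2..m}" "beta m p j < p j" using j by (auto simp: Iset_def)
  then show "p j \<in> {2..m}" using p_in[of j] beta_range[of j] by auto
  show "Sdef m p j \<subseteq> {c \<in> {2..m}. p c = p j}" by (auto simp: Sdef_def)
  show "j \<in> Sdef m p j" using j1 by (auto simp: Sdef_def)
qed

lemma Mv_back:
  assumes j: "j \<in> Iset"
  shows "insp m p (Mv j) \<in> cayley_trees (Suc m) \<and> remp m (insp m p (Mv j)) = p \<and> rpos m (insp m p (Mv j)) = Mv j"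
proof -
  let ?i = "p j" and ?S = "Sdef m p j"
  interpret I: ins_ctx m p ?i ?S by unfold_locales (use Mv_i[OF j] in auto)
  let ?q = "insg m p ?i ?S"
  have jS: "j \<in> ?S" using Mv_i[OF j] by simp
  have j1: "j \<in> {2..m}" "beta m p j < p j" using j by (auto simp: Iset_def)
  have ch: "chN m ?q = insert ?i ?S"
  proof -
    have "c' = ?i \<or> c' \<in> ?S" if "c' \<in> {2..Suc m}" "?q c' = Suc m" for c'
    proof (rule ccontr)
      assume h: "\<not> (c' = ?i \<or> c' \<in> ?S)"
      show False
      proof (cases "c' = Suc m")
        case True
        then have "?q c' = p ?i" by simp
        then show False using that p_le[of ?i] I.iN by simp
      next
        case False
        then have "?q c' = p c'" using h I.qo by blast
        moreover have "c' \<le> m" using False that by simp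
        ultimately show False using that p_le[of c'] by simp
      qed
    qed
    moreover have "?S \<subseteq> {2..Suc m}" by (auto simp: Sdef_def)
    ultimately show ?thesis using I.qi I.qS I.iN Mv_i(1)[OF j] by (auto simp: chN_def)
  qed
  have key: "beta (Suc m) ?q c < beta (Suc m) ?q ?i" if c: "c \<in> ?S" for c
  proof -
    have bc: "beta m p c \<le> beta m p j" using c by (auto simp: Sdef_def)
    let ?u = "beta (Suc m) ?q ?i"
    have "?u \<in> desc (Suc m) ?q ?i" using I.Q.beta_in[of ?i] I.iN by auto
    then have u: "?u \<in> desc m p ?i" "?u \<notin> I.DS" using I.desc_q_i by auto
    have "beta m p j < ?u"
    proof (cases "?u = ?i")
      case True then show ?thesis using j1 by simp
    next
      case False
      obtain c' where c': "c' \<in> {2..m}" "p c' = ?i" "?u \<in> desc m p c'"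
        using desc_decomp[OF I.iN(2) u(1) False] by blast
      have "c' \<notin> ?S"
      proof
        assume "c' \<in> ?S"
        moreover have "c' \<in> anc p ?u" using c'(3) by (auto simp: desc_anc)
        ultimately have "?u \<in> I.DS" by (auto simp: I.DS_def)
        then show False using u by simp
      qed
      then have "beta m p j < beta m p c'" using c' by (auto simp: Sdef_def)
      also have "\<dots> \<le> ?u" using c'(3) by (rule beta_le)
      finally show ?thesis .
    qed
    then show ?thesis using bc I.beta_q_S[OF c] by simp
  qed
  have iv: "iv m ?q = ?i" unfolding iv_def ch
    by (rule amax_eq) (use key in auto)
  have Sv: "Sv m ?q = ?S" using I.iS by (auto simp: Sv_def ch iv)
  have "remp m ?q = p"
  proof
    fix v show "remp m ?q v = p v"
      using iv Sv ch p_out[of "Suc m"] by (auto simp: remp_def insg_def Sdef_def)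
  qed
  moreover have "amax (beta (Suc m) ?q) ?S = j"
  proof (rule amax_eq)
    show "j \<in> ?S" by (rule jS)
    show "\<forall>b\<in>?S. b \<noteq> j \<longrightarrow> beta (Suc m) ?q b < beta (Suc m) ?q j"
    proof (intro ballI impI)
      fix b assume b: "b \<in> ?S" "b \<noteq> j"
      have "beta m p b \<le> beta m p j" using b by (auto simp: Sdef_def)
      moreover have "beta m p b \<noteq> beta m p j" using b j1 by (intro sib_beta) (auto simp: Sdef_def)
      ultimately show "beta (Suc m) ?q b < beta (Suc m) ?q j"
        using I.beta_q_S[OF b(1)] I.beta_q_S[OF jS] by simp
    qed
  qed
  then have "rpos m ?q = Mv j" using jS by (auto simp: rpos_def ch Sv)
  ultimately show ?thesis using I.q_ct by simp
qed

lemma PS_back: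
  assumes "pos \<in> PS m p"
  shows "insp m p pos \<in> cayley_trees (Suc m) \<and> remp m (insp m p pos) = p \<and> rpos m (insp m p pos) = pos"
  using assms Lf_back Sb_back Mv_back by (auto simp: PS_def)

end

lemma bij_ins:
  assumes m: "1 \<le> m"
  shows "bij_betw (\<lambda>(p, pos). insp m p pos) (SIGMA p:cayley_trees m. PS m p) (cayley_trees (Suc m))"
proof (rule bij_betw_byWitness[where f'="\<lambda>q. (remp m q, rpos m q)"])
  show "\<forall>a\<in>(SIGMA p:cayley_trees m. PS m p). (\<lambda>q. (remp m q, rpos m q)) ((\<lambda>(p, pos). insp m p pos) a) = a"
    using ctree.PS_back by (auto simp: ctree_def)
  show "(\<lambda>(p, pos). insp m p pos) ` (SIGMA p:cayley_trees m. PS m p) \<subseteq> cayley_trees (Suc m)"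
    using ctree.PS_back by (auto simp: ctree_def)
  show "\<forall>a'\<in>cayley_trees (Suc m). (\<lambda>(p, pos). insp m p pos) ((\<lambda>q. (remp m q, rpos m q)) a') = a'"
  proof
    fix q assume q: "q \<in> cayley_trees (Suc m)"
    interpret R: rem_ctx m q by unfold_locales (use q m in auto)
    show "(\<lambda>(p, pos). insp m p pos) ((\<lambda>q. (remp m q, rpos m q)) q) = q"
    proof (cases "chN m q = {}")
      case True
      interpret RL: rem_leaf m q by unfold_locales (rule True)
      show ?thesis using RL.ins_back RL.remp_eq by simp
    next
      case False
      interpret RI: rem_int m q by unfold_locales (rule False)
      show ?thesis using RI.ins_back by simp
    qed
  qed
  show "(\<lambda>q. (remp m q, rpos m q)) ` cayley_trees (Suc m) \<subseteq> (SIGMA p:cayley_trees m. PS m p)"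
  proof
    fix a assume "a \<in> (\<lambda>q. (remp m q, rpos m q)) ` cayley_trees (Suc m)"
    then obtain q where q: "q \<in> cayley_trees (Suc m)" and a: "a = (remp m q, rpos m q)" by blast
    interpret R: rem_ctx m q by unfold_locales (use q m in auto)
    show "a \<in> (SIGMA p:cayley_trees m. PS m p)"
    proof (cases "chN m q = {}")
      case True
      interpret RL: rem_leaf m q by unfold_locales (rule True)
      show ?thesis using RL.p_ct RL.rpos_PS RL.remp_eq a by simp
    next
      case False
      interpret RI: rem_int m q by unfold_locales (rule False)
      show ?thesis using RI.p_ct RI.rpos_PS a by simp
    qed
  qed
qed


definition U :: "real poly" where "U = [:1,1:]"
definition V :: "real \<Rightarrow> real poly" where "V t = [:t,1:]"

definition W :: "real \<Rightarrow> real \<Rightarrow> real \<Rightarrow> nat \<Rightarrow> (nat \<Rightarrow> nat) \<Rightarrow> real poly" where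
  "W x z t m p = smult (x ^ (root_deg m p - 1) * z ^ (lead m p - root_deg m p - 1))
      (U ^ (impe m p - impp m p) * V t ^ impp m p)"

definition mx :: "nat \<Rightarrow> (nat \<Rightarrow> nat) \<Rightarrow> nat \<Rightarrow> bool" where
  "mx m p j \<longleftrightarrow> (\<forall>c\<in>{2..m}. p c = p j \<and> beta m p c < p j \<longrightarrow> beta m p c \<le> beta m p j)"

context ctree
begin

lemma W_alt:
  assumes "1 \<le> m"
  shows "W x z t m p = smult (x ^ (root_deg m p - 1) * z ^ (m - impe m p - root_deg m p - 1))
      (U ^ (impe m p - impp m p) * V t ^ impp m p)"
  using lead_eq[OF assms] by (simp add: W_def)

lemma W_Lf1:
  assumes m: "2 \<le> m"
  shows "W x z t (Suc m) (insp m p (Lf 1)) = smult x (W x z t m p)"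
proof -
  have m1: "1 \<le> m" and m1': "1 \<le> Suc m" using m by auto
  interpret L: leaf_ctx m p 1 by unfold_locales (use m in auto)
  have d: "1 \<le> root_deg m p" using root_deg_pos m by simp
  have b: "impe m p + root_deg m p + 1 \<le> m" using impe_deg m by simp
  have e1: "Suc m - impe m p - (root_deg m p + 1) - 1 = m - impe m p - root_deg m p - 1" using b by simp
  have e2: "x ^ (root_deg m p + 1 - 1) = x * x ^ (root_deg m p - 1)" using d
    by (metis add_diff_cancel_right' le_add_diff_inverse2 power_Suc plus_1_eq_Suc add.commute)
  have "W x z t (Suc m) (insp m p (Lf 1)) = W x z t (Suc m) L.q" by simp
  also have "\<dots> = smult (x ^ (root_deg (Suc m) L.q - 1) * z ^ (Suc m - impe (Suc m) L.q - root_deg (Suc m) L.q - 1))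
      (U ^ (impe (Suc m) L.q - impp (Suc m) L.q) * V t ^ impp (Suc m) L.q)"
    by (rule L.Q.W_alt[OF m1'])
  also have "\<dots> = smult x (W x z t m p)"
    unfolding W_alt[OF m1] L.impe_q L.impp_q L.deg_q using e1 e2 by (simp add: mult.assoc)
  finally show ?thesis .
qed

lemma W_Lf:
  assumes m: "2 \<le> m" and v: "v \<in> {2..m}"
  shows "W x z t (Suc m) (insp m p (Lf v)) = smult z (W x z t m p)"
proof -
  have m1: "1 \<le> m" and m1': "1 \<le> Suc m" using m by auto
  interpret L: leaf_ctx m p v by unfold_locales (use v in auto)
  have b: "impe m p + root_deg m p + 1 \<le> m" using impe_deg m by simp
  have e1: "Suc m - impe m p - root_deg m p - 1 = Suc (m - impe m p - root_deg m p - 1)" using b by simp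
  have "W x z t (Suc m) (insp m p (Lf v)) = W x z t (Suc m) L.q" by simp
  also have "\<dots> = smult (x ^ (root_deg (Suc m) L.q - 1) * z ^ (Suc m - impe (Suc m) L.q - root_deg (Suc m) L.q - 1))
      (U ^ (impe (Suc m) L.q - impp (Suc m) L.q) * V t ^ impp (Suc m) L.q)"
    by (rule L.Q.W_alt[OF m1'])
  also have "\<dots> = smult z (W x z t m p)"
    unfolding W_alt[OF m1] L.impe_q L.impp_q L.deg_q using e1 v by (simp add: mult_ac)
  finally show ?thesis .
qed

lemma W_Sb:
  assumes m: "2 \<le> m" and c: "c \<in> {2..m}"
  shows "W x z t (Suc m) (insp m p (Sb c)) = V t * W x z t m p"
proof -
  have m1: "1 \<le> m" and m1': "1 \<le> Suc m" using m by auto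
  interpret I: ins_ctx m p c "{}" by unfold_locales (use c in auto)
  have e: "impe (Suc m) I.q = impe m p + 1" using I.impe_q by simp
  have f: "impp (Suc m) I.q = impp m p + 1"
  proof -
    have "I.cond \<longleftrightarrow> c \<in> Pset" unfolding I.cond_def using c by (auto simp: Pset_def)
    then have "(if I.cond then Pset else Pset - {c}) = Pset" by auto
    then show ?thesis using I.impp_q by (simp add: impp_Pset)
  qed
  have le: "impp m p \<le> impe m p" by (rule impp_le_impe)
  have "W x z t (Suc m) (insp m p (Sb c)) = W x z t (Suc m) I.q" by simp
  also have "\<dots> = smult (x ^ (root_deg (Suc m) I.q - 1) * z ^ (Suc m - impe (Suc m) I.q - root_deg (Suc m) I.q - 1))
      (U ^ (impe (Suc m) I.q - impp (Suc m) I.q) * V t ^ impp (Suc m) I.q)"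
    by (rule I.Q.W_alt[OF m1'])
  also have "\<dots> = V t * W x z t m p"
    unfolding W_alt[OF m1] e f I.deg_q using le by (simp add: mult_ac)
  finally show ?thesis .
qed

lemma W_Mv:
  assumes m: "2 \<le> m" and j: "j \<in> Iset"
  shows "W x z t (Suc m) (insp m p (Mv j)) = (if mx m p j then U else V t) * W x z t m p"
proof -
  have m1: "1 \<le> m" and m1': "1 \<le> Suc m" using m by auto
  interpret I: ins_ctx m p "p j" "Sdef m p j" by unfold_locales (use Mv_i[OF j] in auto)
  have j1: "j \<in> {2..m}" "beta m p j < p j" using j by (auto simp: Iset_def)
  have simp_: "\<forall>c\<in>Sdef m p j. beta m p c < p j" using j1 by (auto simp: Sdef_def)
  have e: "impe (Suc m) I.q = impe m p + 1" using I.impe_q[OF simp_] by simp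
  have cond: "I.cond \<longleftrightarrow> \<not> mx m p j" unfolding I.cond_def by (auto simp: mx_def Sdef_def)
  have pjP: "p j \<in> Pset" using j1 Mv_i(1)[OF j] by (auto simp: Pset_def)
  have le: "impp m p \<le> impe m p" by (rule impp_le_impe)
  have fin: "finite Pset" by (rule finite_subset[of _ "{1..m}"]) (auto simp: Pset_def)
  have "W x z t (Suc m) (insp m p (Mv j)) = W x z t (Suc m) I.q" by simp
  also have "\<dots> = smult (x ^ (root_deg (Suc m) I.q - 1) * z ^ (Suc m - impe (Suc m) I.q - root_deg (Suc m) I.q - 1))
      (U ^ (impe (Suc m) I.q - impp (Suc m) I.q) * V t ^ impp (Suc m) I.q)"
    by (rule I.Q.W_alt[OF m1'])
  also have "\<dots> = (if mx m p j then U else V t) * W x z t m p"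
  proof (cases "mx m p j")
    case True
    have "card (Pset - {p j}) + 1 = card Pset" using pjP fin
      by (metis One_nat_def Suc_pred card_Diff_singleton card_gt_0_iff empty_iff add.commute plus_1_eq_Suc)
    then have f: "impp (Suc m) I.q = impp m p"
      using I.impp_q cond True by (simp add: impp_Pset)
    have g: "impe m p + 1 - impp m p = Suc (impe m p - impp m p)" using le by simp
    show ?thesis unfolding W_alt[OF m1] e f I.deg_q g using True by (simp add: mult_ac)
  next
    case False
    then have f: "impp (Suc m) I.q = impp m p + 1"
      using I.impp_q cond by (simp add: impp_Pset)
    show ?thesis unfolding W_alt[OF m1] e f I.deg_q using False le by (simp add: mult_ac)
  qed
  finally show ?thesis .
qed

end


context ctree
begin

lemma card_mx: "card {j \<in> Iset. mx m p j} = impp m p"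
proof -
  have "bij_betw p {j \<in> Iset. mx m p j} Pset"
  proof (rule bij_betw_imageI)
    show "inj_on p {j \<in> Iset. mx m p j}"
    proof (rule inj_onI)
      fix j j' assume j: "j \<in> {j \<in> Iset. mx m p j}" and j': "j' \<in> {j \<in> Iset. mx m p j}" and e: "p j = p j'"
      have a: "j \<in> {2..m}" "beta m p j < p j" "mx m p j" using j by (auto simp: Iset_def)
      have b: "j' \<in> {2..m}" "beta m p j' < p j'" "mx m p j'" using j' by (auto simp: Iset_def)
      have "beta m p j \<le> beta m p j'" using b(3) a e unfolding mx_def by auto
      moreover have "beta m p j' \<le> beta m p j" using a(3) b e unfolding mx_def by auto
      ultimately have "beta m p j = beta m p j'" by simp
      then show "j = j'" using sib_beta[of j j'] a b e by auto
    qed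
    show "p ` {j \<in> Iset. mx m p j} = Pset"
    proof
      show "p ` {j \<in> Iset. mx m p j} \<subseteq> Pset" unfolding Pset_img by auto
      show "Pset \<subseteq> p ` {j \<in> Iset. mx m p j}"
      proof
        fix i assume i: "i \<in> Pset"
        let ?J = "{c \<in> {2..m}. p c = i \<and> beta m p c < i}"
        have ne: "?J \<noteq> {}" using i by (auto simp: Pset_def)
        have fin: "finite ?J" by simp
        let ?j = "amax (beta m p) ?J"
        have jJ: "?j \<in> ?J" and jm: "\<forall>b\<in>?J. beta m p b \<le> beta m p ?j" using amax_ex[OF fin ne] by auto
        have "?j \<in> Iset" using jJ by (auto simp: Iset_def)
        moreover have "mx m p ?j" using jJ jm unfolding mx_def by auto
        ultimately show "i \<in> p ` {j \<in> Iset. mx m p j}" using jJ by (intro image_eqI[of _ _ ?j]) auto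
      qed
    qed
  qed
  then show ?thesis by (simp add: bij_betw_same_card impp_Pset)
qed

lemma card_nmx: "card {j \<in> Iset. \<not> mx m p j} = impe m p - impp m p"
proof -
  have fin: "finite Iset" by (rule finite_subset[of _ "{2..m}"]) (auto simp: Iset_def)
  have "card Iset = card {j \<in> Iset. mx m p j} + card {j \<in> Iset. \<not> mx m p j}"
    using fin by (subst card_Un_disjoint[symmetric]) (auto intro: arg_cong[where f=card])
  then show ?thesis using card_mx by (simp add: impe_Iset)
qed

lemma PS_sum:
  assumes m: "2 \<le> m"
  shows "(\<Sum>pos\<in>PS m p. W x z t (Suc m) (insp m p pos))
    = smult x (W x z t m p) + smult (of_nat (m - 1) * z) (W x z t m p)
      + smult (of_nat (m - 1)) (V t * W x z t m p)
      + smult (of_nat (impp m p)) (U * W x z t m p)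
      + smult (of_nat (impe m p - impp m p)) (V t * W x z t m p)"
proof -
  let ?f = "\<lambda>pos. W x z t (Suc m) (insp m p pos)"
  let ?W = "W x z t m p"
  have finI: "finite Iset" by (rule finite_subset[of _ "{2..m}"]) (auto simp: Iset_def)
  have d1: "(Lf ` {1..m} \<union> Sb ` {2..m}) \<inter> Mv ` Iset = {}" by auto
  have d2: "Lf ` {1..m} \<inter> Sb ` {2..m} = {}" by auto
  have "sum ?f (PS m p) = sum ?f (Lf ` {1..m}) + sum ?f (Sb ` {2..m}) + sum ?f (Mv ` Iset)"
    unfolding PS_def using finI d1 d2 by (simp add: sum.union_disjoint)
  also have "sum ?f (Lf ` {1..m}) = (\<Sum>v\<in>{1..m}. ?f (Lf v))"
    by (simp add: sum.reindex inj_on_def)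
  also have "\<dots> = ?f (Lf 1) + (\<Sum>v\<in>{2..m}. ?f (Lf v))"
  proof -
    have "{1..m} = insert 1 {2..m}" using m by auto
    then show ?thesis by simp
  qed
  also have "(\<Sum>v\<in>{2..m}. ?f (Lf v)) = (\<Sum>v\<in>{2..m}. smult z ?W)"
    by (rule sum.cong[OF refl W_Lf[OF m]])
  also have "\<dots> = smult (of_nat (m - 1) * z) ?W" by (simp add: sum_constant of_nat_poly mult.commute)
  also have "?f (Lf 1) = smult x ?W" by (rule W_Lf1[OF m])
  also have "sum ?f (Sb ` {2..m}) = (\<Sum>c\<in>{2..m}. ?f (Sb c))"
    by (simp add: sum.reindex inj_on_def)
  also have "\<dots> = (\<Sum>c\<in>{2..m}. V t * ?W)"
    by (rule sum.cong[OF refl W_Sb[OF m]])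
  also have "\<dots> = smult (of_nat (m - 1)) (V t * ?W)" by (simp add: sum_constant of_nat_poly)
  also have "sum ?f (Mv ` Iset) = (\<Sum>j\<in>Iset. ?f (Mv j))"
    by (simp add: sum.reindex inj_on_def)
  also have "\<dots> = (\<Sum>j\<in>Iset. (if mx m p j then U else V t) * ?W)"
    by (rule sum.cong[OF refl W_Mv[OF m]])
  also have "\<dots> = (\<Sum>j\<in>Iset. if mx m p j then U * ?W else V t * ?W)"
    by (rule sum.cong) auto
  also have "\<dots> = (\<Sum>j\<in>{j \<in> Iset. mx m p j}. U * ?W) + (\<Sum>j\<in>{j \<in> Iset. \<not> mx m p j}. V t * ?W)"
  proof -
    have s1: "Iset \<inter> {j. mx m p j} = {j \<in> Iset. mx m p j}" by auto
    have s2: "Iset \<inter> - {j. mx m p j} = {j \<in> Iset. \<not> mx m p j}" by auto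
    show ?thesis using sum.If_cases[OF finI, of "\<lambda>j. mx m p j" "\<lambda>_. U * ?W" "\<lambda>_. V t * ?W"]
      unfolding s1 s2 by simp
  qed
  also have "\<dots> = smult (of_nat (impp m p)) (U * ?W) + smult (of_nat (impe m p - impp m p)) (V t * ?W)"
    by (simp add: sum_constant of_nat_poly card_mx card_nmx)
  finally show ?thesis by (simp add: add.assoc)
qed

end


lemma pdU: "pderiv U = 1" by (simp add: U_def pderiv_pCons)
lemma pdV: "pderiv (V t) = 1" by (simp add: V_def pderiv_pCons)

lemma pp: "smult (of_nat n) (P * P ^ (n - 1)) = smult (of_nat n) (P ^ n)" for P :: "real poly"
  by (cases n) simp_all

lemma op_mono:
  "V t * U * pderiv (smult k (U ^ a * V t ^ b))
   = smult (of_nat a) (V t * smult k (U ^ a * V t ^ b)) + smult (of_nat b) (U * smult k (U ^ a * V t ^ b))"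
proof -
  have "pderiv (U ^ a * V t ^ b) = smult (of_nat a) (U ^ (a - 1)) * V t ^ b + U ^ a * smult (of_nat b) (V t ^ (b - 1))"
    by (simp add: pderiv_mult pderiv_power pdU pdV algebra_simps)
  then have "V t * U * pderiv (smult k (U ^ a * V t ^ b))
     = smult k (V t ^ b * V t * smult (of_nat a) (U * U ^ (a - 1)) + U ^ a * U * smult (of_nat b) (V t * V t ^ (b - 1)))"
    by (simp add: pderiv_smult algebra_simps)
  also have "\<dots> = smult k (V t ^ b * V t * smult (of_nat a) (U ^ a) + U ^ a * U * smult (of_nat b) (V t ^ b))"
    by (simp only: pp)
  also have "\<dots> = smult (of_nat a) (V t * smult k (U ^ a * V t ^ b)) + smult (of_nat b) (U * smult k (U ^ a * V t ^ b))"
    by (simp add: algebra_simps smult_add_right)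
  finally show ?thesis .
qed

lemma pderiv_sum': "pderiv (sum f A) = (\<Sum>a\<in>A. pderiv (f a))" for f :: "'a \<Rightarrow> real poly"
  by (induction A rule: infinite_finite_induct) (auto simp: pderiv_add)

lemma const_mult: "[:c:] * P = smult c P" for P :: "real poly"
  by simp

context ctree
begin

lemma W_op:
  "V t * U * pderiv (W x z t m p) = smult (of_nat (impe m p - impp m p)) (V t * W x z t m p) + smult (of_nat (impp m p)) (U * W x z t m p)"
  unfolding W_def by (rule op_mono)

lemma PS_sum_op:
  assumes m: "2 \<le> m"
  shows "(\<Sum>pos\<in>PS m p. W x z t (Suc m) (insp m p pos))
    = [:x + of_nat (m - 1) * z + of_nat (m - 1) * t, of_nat (m - 1):] * W x z t m p + V t * U * pderiv (W x z t m p)"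
proof -
  have e: "[:x + of_nat (m - 1) * z + of_nat (m - 1) * t, of_nat (m - 1):] = [:x:] + [:of_nat (m - 1) * z:] + smult (of_nat (m - 1)) (V t)"
    by (simp add: V_def)
  show ?thesis unfolding PS_sum[OF m] W_op e by (simp add: algebra_simps smult_add_left)
qed

end

lemma tree_rec:
  assumes m: "2 \<le> m"
  shows "(\<Sum>q\<in>cayley_trees (Suc m). W x z t (Suc m) q)
    = [:x + of_nat (m - 1) * z + of_nat (m - 1) * t, of_nat (m - 1):] * (\<Sum>p\<in>cayley_trees m. W x z t m p)
      + V t * U * pderiv (\<Sum>p\<in>cayley_trees m. W x z t m p)"
proof -
  have "(\<Sum>q\<in>cayley_trees (Suc m). W x z t (Suc m) q)
      = (\<Sum>a\<in>(SIGMA p:cayley_trees m. PS m p). W x z t (Suc m) ((\<lambda>(p, pos). insp m p pos) a))"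
    using sum.reindex_bij_betw[OF bij_ins, of m "W x z t (Suc m)"] m by simp
  also have "\<dots> = (\<Sum>p\<in>cayley_trees m. \<Sum>pos\<in>PS m p. W x z t (Suc m) (insp m p pos))"
  proof -
    have "finite (ctree.Iset m p)" if "p \<in> cayley_trees m" for p
      using ctree.Iset_def[of m p] that by (simp add: ctree_def)
    then have "\<forall>p\<in>cayley_trees m. finite (PS m p)" by (simp add: PS_def)
    then show ?thesis using finite_ct sum.Sigma[of "cayley_trees m" "PS m" "\<lambda>p pos. W x z t (Suc m) (insp m p pos)"]
      by (simp add: split_def)
  qed
  also have "\<dots> = (\<Sum>p\<in>cayley_trees m. [:x + of_nat (m - 1) * z + of_nat (m - 1) * t, of_nat (m - 1):] * W x z t m p + V t * U * pderiv (W x z t m p))"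
    by (rule sum.cong[OF refl]) (use ctree.PS_sum_op[OF _ m] in \<open>auto simp: ctree_def\<close>)
  also have "\<dots> = [:x + of_nat (m - 1) * z + of_nat (m - 1) * t, of_nat (m - 1):] * (\<Sum>p\<in>cayley_trees m. W x z t m p)
      + V t * U * pderiv (\<Sum>p\<in>cayley_trees m. W x z t m p)"
    by (simp add: sum.distrib sum_distrib_left pderiv_sum')
  finally show ?thesis .
qed


lemma Qc_rec:
  "pcompose (Qpoly (Suc (Suc k)) x z (t - 1)) U
   = [:x + of_nat (Suc k) * z + of_nat (Suc k) * t, of_nat (Suc k):] * pcompose (Qpoly (Suc k) x z (t - 1)) U
     + V t * U * pderiv (pcompose (Qpoly (Suc k) x z (t - 1)) U)"
proof -
  let ?q = "Qpoly (Suc k) x z (t - 1)"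
  let ?M = "real (Suc k)"
  have d: "pderiv (pcompose ?q U) = pcompose (pderiv ?q) U"
    by (simp add: pderiv_pcompose pdU)
  have a: "pcompose [:x + ?M * z + (t - 1) * ?M, ?M:] U = [:x + ?M * z + ?M * t, ?M:]"
    by (simp add: pcompose_pCons U_def algebra_simps)
  have b: "pcompose ([:t - 1, 1:] * [:0, 1:]) U = V t * U"
    by (simp add: pcompose_mult pcompose_pCons U_def V_def algebra_simps)
  have "Qpoly (Suc (Suc k)) x z (t - 1) = [:x + ?M * z + (t - 1) * ?M, ?M:] * ?q + ([:t - 1, 1:] * [:0, 1:]) * pderiv ?q"
    by (simp add: Let_def mult.assoc)
  then have "pcompose (Qpoly (Suc (Suc k)) x z (t - 1)) U
     = pcompose [:x + ?M * z + (t - 1) * ?M, ?M:] U * pcompose ?q U + pcompose ([:t - 1, 1:] * [:0, 1:]) U * pcompose (pderiv ?q) U"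
    by (simp only: pcompose_add pcompose_mult)
  also have "\<dots> = [:x + ?M * z + ?M * t, ?M:] * pcompose ?q U + V t * U * pderiv (pcompose ?q U)"
    unfolding a b d ..
  finally show ?thesis by simp
qed

definition p2 :: "nat \<Rightarrow> nat" where "p2 = (\<lambda>v. if v = 2 then 1 else 0)"

lemma ct2: "cayley_trees 2 = {p2}"
proof
  show "{p2} \<subseteq> cayley_trees 2"
  proof -
    have "\<exists>k. (p2 ^^ k) v = 1" if "v \<in> {1..2}" for v
    proof (cases "v = 1")
      case True then show ?thesis by (intro exI[of _ 0]) simp
    next
      case False then have "v = 2" using that by auto
      then show ?thesis by (intro exI[of _ 1]) (simp add: p2_def)
    qed
    then show ?thesis by (auto simp: cayley_trees_def p2_def)
  qed
  show "cayley_trees 2 \<subseteq> {p2}"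
  proof
    fix p assume p: "p \<in> cayley_trees 2"
    interpret ctree 2 p by unfold_locales (rule p)
    have "p 2 \<in> {1..2}" using p_in[of 2] by simp
    moreover have "p 2 \<noteq> 2" using p_neq[of 2] by simp
    ultimately have "p 2 = 1" by auto
    moreover have "p v = 0" if "v \<noteq> 2" for v using p_out[of v] that by auto
    ultimately have "p = p2" by (auto simp: p2_def)
    then show "p \<in> {p2}" by simp
  qed
qed

lemma W2: "W x z t 2 p2 = 1"
proof -
  interpret ctree 2 p2 using ct2 by unfold_locales auto
  have "impe 2 p2 + root_deg 2 p2 + 1 \<le> 2" using impe_deg by simp
  moreover have "1 \<le> root_deg 2 p2" using root_deg_pos by simp
  ultimately have e: "impe 2 p2 = 0" "root_deg 2 p2 = 1" by auto
  then have "impp 2 p2 = 0" using impp_le_impe by simp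
  then show ?thesis using W_alt[of x z t] e by simp
qed

lemma main_poly:
  assumes "1 \<le> n"
  shows "pcompose (Qpoly n x z (t - 1)) U = (\<Sum>p\<in>cayley_trees (n + 1). W x z t (n + 1) p)"
  using assms
proof (induction n rule: nat_induct_at_least)
  case base
  have e: "(1::nat) + 1 = 2" by simp
  have "Qpoly 1 x z (t - 1) = [:1:]" by (simp add: one_pCons)
  then have "pcompose (Qpoly 1 x z (t - 1)) U = 1"
    by (simp add: pcompose_const one_pCons)
  then show ?case unfolding e ct2 using W2 by simp
next
  case (Suc n)
  then obtain k where k: "n = Suc k" by (cases n) auto
  have m: "2 \<le> n + 1" using Suc by simp
  show ?case
    unfolding k Qc_rec using Suc.IH[unfolded k] tree_rec[of "Suc k + 1" x z t] m k by simp
qed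

theorem theorem13:
  fixes n :: nat and x y z t :: real
  assumes "n \<ge> 1"
  shows "R n x y z t =
    (\<Sum>p\<in>cayley_trees (n + 1).
        (y + 1) ^ (impe (n + 1) p - impp (n + 1) p)
      * (y + t) ^ impp (n + 1) p
      * x ^ (root_deg (n + 1) p - 1)
      * z ^ (lead (n + 1) p - root_deg (n + 1) p - 1))"
proof -
  have "R n x y z t = poly (pcompose (Qpoly n x z (t - 1)) U) y"
    by (simp add: R_def Q_def poly_pcompose U_def add.commute)
  also have "\<dots> = (\<Sum>p\<in>cayley_trees (n + 1). poly (W x z t (n + 1) p) y)"
    using main_poly[OF assms] by (simp add: poly_sum)
  also have "\<dots> = (\<Sum>p\<in>cayley_trees (n + 1).
        (y + 1) ^ (impe (n + 1) p - impp (n + 1) p)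
      * (y + t) ^ impp (n + 1) p
      * x ^ (root_deg (n + 1) p - 1)
      * z ^ (lead (n + 1) p - root_deg (n + 1) p - 1))"
    by (rule sum.cong) (simp_all add: W_def U_def V_def add.commute mult_ac)
  finally show ?thesis .
qed


end
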